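(* Let $l,u$ be integers with $0\le l\le u\le K$, $u>0$, $l<K$. Suppose that for every $\alpha,\beta\in(0,1)$ the thresholds $a,b,c,d$ of the proposed procedure $\hat\chi$ are chosen so that $\hat\chi\in\Delta(\alpha,\beta,\Pi_{l,u})$, and that $a,c\sim|\log\alpha|$ and $b,d\sim|\log\beta|$ as $\alpha,\beta\to0$. Suppose that for every $k\in[K]$ there are positive $I_k,J_k$ such that $$\mathrm P_k^1\Big(\limsup_n\tfrac{\lambda_k(n)}{n}\le I_k\Big)=1,\quad \mathrm P_k^0\Big(\limsup_n\tfrac{-\lambda_k(n)}{n}\le J_k\Big)=1,$$ and, for every $\epsilon>0$, $\sum_n\mathrm P_k^1(\lambda_k(n)/n\le I_k-\epsilon)<\infty$ and $\sum_n\mathrm P_k^0(-\lambda_k(n)/n\le J_k-\epsilon)<\infty$. Then, as $\alpha,\beta\to0$, $$\mathrm E_A[\hat T_i]\sim\mathcal L_{i,A}(\alpha,\beta,\Pi_{l,u})\sim\frac{|\log\alpha|}{I_i+\mathcal J_A\mathbf 1\{|A|=l\}},\qquad \mathrm E_A[\hat T_j]\sim\mathcal L_{j,A}(\alpha,\beta,\Pi_{l,u})\sim\frac{|\log\beta|}{J_j+\mathcal I_A\mathbf 1\{|A|=u\}},$$ simultaneously for every $i\in A$, $j\notin A$, $A\in\Pi_{l,u}$.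
   Context: Let $K\ge1$, $[K]=\{1,\dots,K\}$, $\mathbb N=\{1,2,\dots\}$. There are $K$ independent data streams $X_k=\{X_k(n):n\in\mathbb N\}$; $\mathcal F_k(n)=\sigma(X_k(t):t\le n)$, $\mathcal F(n)=\sigma(\mathcal F_k(n):k\in[K])$. For each $k$, $\mathrm P_k^0,\mathrm P_k^1$ are distributions of $X_k$ mutually absolutely continuous on each $\mathcal F_k(n)$, $\lambda_k(n)=\log\frac{d\mathrm P_k^1}{d\mathrm P_k^0}(\mathcal F_k(n))$. For $A\subseteq[K]$, $\mathrm P_A$ is the joint law with independent streams, $X_k\sim\mathrm P_k^1$ if $k\in A$, $\mathrm P_k^0$ otherwise; $\mathrm E_A$ its expectation. $\mathcal I_A=\min_{i\in A}I_i$, $\mathcal J_A=\min_{j\notin A}J_j$ (min over empty set $=\infty$). $\Pi_{l,u}=\{A\subseteq[K]:l\le|A|\le u\}$. $\lambda_{(1)}(n)\ge\dots\ge\lambda_{(K)}(n)$ are the ordered LLRs. A procedure $\chi=(\mathbf T,\mathbf D)$: $\mathbb N$-valued stopping times $T_k$ w.r.t. $\{\mathcal F(n)\}$ and $\mathcal F(T_k)$-measurable Bernoulli $D_k$. $\mathrm{FWE}^1_A(\chi)=\mathrm P_A(\exists j\notin A:D_j=1)$, $\mathrm{FWE}^2_A(\chi)=\mathrm P_A(\exists i\in A:D_i=0)$. $\Delta(\alpha,\beta,\Pi)$: procedures with $\mathrm{FWE}^1_A\le\alpha$, $\mathrm{FWE}^2_A\le\beta$ for all $A\in\Pi$; $\mathcal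 L_{k,A}(\alpha,\beta,\Pi)=\inf\{\mathrm E_A[T_k]:\chi\in\Delta(\alpha,\beta,\Pi)\}$. Proposed procedure $\hat\chi$ (thresholds $a,b,c,d>0$): $\hat T_k=\hat T_{k,1}\wedge\hat T_{k,2}$, $D_k=1$ iff $\hat T_k=\hat T_{k,1}$; if $l=u\equiv m$, $\hat T_{k,1}=\inf\{n:\lambda_k(n)\ge\lambda_{(m+1)}(n)+c\}$, $\hat T_{k,2}=\inf\{n:\lambda_k(n)\le\lambda_{(m)}(n)-d\}$; if $l<u$, $\hat T_{k,1}=\inf\{n:\lambda_k(n)\ge\min\{a,\lambda_{(l+1)}(n)+c\}\}$, $\hat T_{k,2}=\inf\{n:\lambda_k(n)\le\max\{-b,\lambda_{(u)}(n)-d\}\}$. $x\sim y$ means $x/y\to1$. *)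

theory Defs
  imports "HOL-Probability.Probability" "HOL-Library.Landau_Symbols"
begin

text \<open>Stream k takes values in the measurable
space M k at each time; its path space is nat \<Rightarrow> 'x, where coordinate t
holds the observation at time t+1. So the first n observations are the coordinates
in {..<n}.\<close>

definition strm_path_space :: "(nat \<Rightarrow> 'x measure) \<Rightarrow> nat \<Rightarrow> (nat \<Rightarrow> 'x) measure" where
  "strm_path_space M k = (\<Pi>\<^sub>M t\<in>(UNIV::nat set). M k)"

definition joint_space :: "nat \<Rightarrow> (nat \<Rightarrow> 'x measure) \<Rightarrow> (nat \<Rightarrow> nat \<Rightarrow> 'x) measure" where
  "joint_space K M = (\<Pi>\<^sub>M k\<in>{1..K}. strm_path_space M k)"

definition stream_filt :: "(nat \<Rightarrow> 'x measure) \<Rightarrow> nat \<Rightarrow> nat \<Rightarrow> (nat \<Rightarrow> 'x) measure" where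
  "stream_filt M k n = vimage_algebra (space (strm_path_space M k)) (\<lambda>x. restrict x {..<n})
     (\<Pi>\<^sub>M t\<in>{..<n}. M k)"

definition joint_filt :: "nat \<Rightarrow> (nat \<Rightarrow> 'x measure) \<Rightarrow> nat \<Rightarrow> (nat \<Rightarrow> nat \<Rightarrow> 'x) measure" where
  "joint_filt K M n = vimage_algebra (space (joint_space K M))
     (\<lambda>\<omega>. \<lambda>k\<in>{1..K}. restrict (\<omega> k) {..<n})
     (\<Pi>\<^sub>M k\<in>{1..K}. \<Pi>\<^sub>M t\<in>{..<n}. M k)"

definition PA :: "nat \<Rightarrow> (nat \<Rightarrow> (nat \<Rightarrow> 'x) measure) \<Rightarrow> (nat \<Rightarrow> (nat \<Rightarrow> 'x) measure)
     \<Rightarrow> nat set \<Rightarrow> (nat \<Rightarrow> nat \<Rightarrow> 'x) measure" where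
  "PA K P0 P1 A = (\<Pi>\<^sub>M k\<in>{1..K}. (if k \<in> A then P1 k else P0 k))"

text \<open>A procedure: stopping times T k (values in {1,2,...}, possibly infinite only on a
  P_A-null set for every A) w.r.t. F(n), and decisions D k measurable w.r.t. F(T k).\<close>
definition is_procedure :: "nat \<Rightarrow> (nat \<Rightarrow> 'x measure) \<Rightarrow> (nat \<Rightarrow> (nat \<Rightarrow> 'x) measure)
     \<Rightarrow> (nat \<Rightarrow> (nat \<Rightarrow> 'x) measure) \<Rightarrow> (nat \<Rightarrow> (nat \<Rightarrow> nat \<Rightarrow> 'x) \<Rightarrow> enat)
     \<Rightarrow> (nat \<Rightarrow> (nat \<Rightarrow> nat \<Rightarrow> 'x) \<Rightarrow> bool) \<Rightarrow> bool" where
  "is_procedure K M P0 P1 T D \<longleftrightarrow>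
     (\<forall>k\<in>{1..K}.
        (\<forall>\<omega>\<in>space (joint_space K M). 1 \<le> T k \<omega>) \<and>
        (\<forall>n. {\<omega>\<in>space (joint_space K M). T k \<omega> \<le> enat n} \<in> sets (joint_filt K M n)) \<and>
        (\<forall>A. A \<subseteq> {1..K} \<longrightarrow> (AE \<omega> in PA K P0 P1 A. T k \<omega> \<noteq> \<infinity>)) \<and>
        {\<omega>\<in>space (joint_space K M). D k \<omega>} \<in> sets (joint_space K M) \<and>
        (\<forall>n. {\<omega>\<in>space (joint_space K M). D k \<omega> \<and> T k \<omega> \<le> enat n} \<in> sets (joint_filt K M n)))"

definition FWE1 :: "nat \<Rightarrow> (nat \<Rightarrow> (nat \<Rightarrow> 'x) measure) \<Rightarrow> (nat \<Rightarrow> (nat \<Rightarrow> 'x) measure)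
     \<Rightarrow> (nat \<Rightarrow> (nat \<Rightarrow> nat \<Rightarrow> 'x) \<Rightarrow> bool) \<Rightarrow> nat set \<Rightarrow> real" where
  "FWE1 K P0 P1 D A = measure (PA K P0 P1 A)
     {\<omega>\<in>space (PA K P0 P1 A). \<exists>j\<in>{1..K} - A. D j \<omega>}"

definition FWE2 :: "nat \<Rightarrow> (nat \<Rightarrow> (nat \<Rightarrow> 'x) measure) \<Rightarrow> (nat \<Rightarrow> (nat \<Rightarrow> 'x) measure)
     \<Rightarrow> (nat \<Rightarrow> (nat \<Rightarrow> nat \<Rightarrow> 'x) \<Rightarrow> bool) \<Rightarrow> nat set \<Rightarrow> real" where
  "FWE2 K P0 P1 D A = measure (PA K P0 P1 A)
     {\<omega>\<in>space (PA K P0 P1 A). \<exists>i\<in>A. \<not> D i \<omega>}"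

definition in_Delta :: "nat \<Rightarrow> (nat \<Rightarrow> 'x measure) \<Rightarrow> (nat \<Rightarrow> (nat \<Rightarrow> 'x) measure)
     \<Rightarrow> (nat \<Rightarrow> (nat \<Rightarrow> 'x) measure) \<Rightarrow> real \<Rightarrow> real \<Rightarrow> nat set set
     \<Rightarrow> (nat \<Rightarrow> (nat \<Rightarrow> nat \<Rightarrow> 'x) \<Rightarrow> enat) \<Rightarrow> (nat \<Rightarrow> (nat \<Rightarrow> nat \<Rightarrow> 'x) \<Rightarrow> bool) \<Rightarrow> bool" where
  "in_Delta K M P0 P1 \<alpha> \<beta> PS T D \<longleftrightarrow> is_procedure K M P0 P1 T D \<and>
     (\<forall>A\<in>PS. FWE1 K P0 P1 D A \<le> \<alpha> \<and> FWE2 K P0 P1 D A \<le> \<beta>)"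

definition ExpT :: "nat \<Rightarrow> (nat \<Rightarrow> (nat \<Rightarrow> 'x) measure) \<Rightarrow> (nat \<Rightarrow> (nat \<Rightarrow> 'x) measure)
     \<Rightarrow> nat set \<Rightarrow> ((nat \<Rightarrow> nat \<Rightarrow> 'x) \<Rightarrow> enat) \<Rightarrow> ennreal" where
  "ExpT K P0 P1 A Tk = (\<integral>\<^sup>+ \<omega>. ennreal_of_enat (Tk \<omega>) \<partial>PA K P0 P1 A)"

definition Lopt :: "nat \<Rightarrow> (nat \<Rightarrow> 'x measure) \<Rightarrow> (nat \<Rightarrow> (nat \<Rightarrow> 'x) measure)
     \<Rightarrow> (nat \<Rightarrow> (nat \<Rightarrow> 'x) measure) \<Rightarrow> real \<Rightarrow> real \<Rightarrow> nat set set \<Rightarrow> nat \<Rightarrow> nat set \<Rightarrow> ennreal" where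
  "Lopt K M P0 P1 \<alpha> \<beta> PS k A =
     (INF TD \<in> {(T, D). in_Delta K M P0 P1 \<alpha> \<beta> PS T D}. ExpT K P0 P1 A (fst TD k))"

definition Pi_lu :: "nat \<Rightarrow> nat \<Rightarrow> nat \<Rightarrow> nat set set" where
  "Pi_lu K l u = {A. A \<subseteq> {1..K} \<and> l \<le> card A \<and> card A \<le> u}"

text \<open>m-th largest value of x 1, ..., x K (m = 1 gives the maximum).\<close>
definition kth_largest :: "nat \<Rightarrow> (nat \<Rightarrow> real) \<Rightarrow> nat \<Rightarrow> real" where
  "kth_largest K x m = rev (sort (map x [1..<Suc K])) ! (m - 1)"

definition first_time :: "(nat \<Rightarrow> bool) \<Rightarrow> enat" where
  "first_time P = (if \<exists>n\<ge>1. P n then enat (LEAST n. 1 \<le> n \<and> P n) else \<infinity>)"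

text \<open>llr k n x: the LLR lambda_k(n) evaluated on the path x of stream k.\<close>
definition hatT1 :: "nat \<Rightarrow> nat \<Rightarrow> nat \<Rightarrow> (nat \<Rightarrow> nat \<Rightarrow> (nat \<Rightarrow> 'x) \<Rightarrow> real)
     \<Rightarrow> real \<Rightarrow> real \<Rightarrow> nat \<Rightarrow> (nat \<Rightarrow> nat \<Rightarrow> 'x) \<Rightarrow> enat" where
  "hatT1 K l u llr a c k \<omega> = first_time (\<lambda>n.
     if l = u then llr k n (\<omega> k) \<ge> kth_largest K (\<lambda>j. llr j n (\<omega> j)) (l + 1) + c
     else llr k n (\<omega> k) \<ge> min a (kth_largest K (\<lambda>j. llr j n (\<omega> j)) (l + 1) + c))"

definition hatT2 :: "nat \<Rightarrow> nat \<Rightarrow> nat \<Rightarrow> (nat \<Rightarrow> nat \<Rightarrow> (nat \<Rightarrow> 'x) \<Rightarrow> real)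
     \<Rightarrow> real \<Rightarrow> real \<Rightarrow> nat \<Rightarrow> (nat \<Rightarrow> nat \<Rightarrow> 'x) \<Rightarrow> enat" where
  "hatT2 K l u llr b d k \<omega> = first_time (\<lambda>n.
     if l = u then llr k n (\<omega> k) \<le> kth_largest K (\<lambda>j. llr j n (\<omega> j)) u - d
     else llr k n (\<omega> k) \<le> max (- b) (kth_largest K (\<lambda>j. llr j n (\<omega> j)) u - d))"

definition hatT :: "nat \<Rightarrow> nat \<Rightarrow> nat \<Rightarrow> (nat \<Rightarrow> nat \<Rightarrow> (nat \<Rightarrow> 'x) \<Rightarrow> real)
     \<Rightarrow> real \<Rightarrow> real \<Rightarrow> real \<Rightarrow> real \<Rightarrow> nat \<Rightarrow> (nat \<Rightarrow> nat \<Rightarrow> 'x) \<Rightarrow> enat" where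
  "hatT K l u llr a b c d k \<omega> = min (hatT1 K l u llr a c k \<omega>) (hatT2 K l u llr b d k \<omega>)"

definition hatD :: "nat \<Rightarrow> nat \<Rightarrow> nat \<Rightarrow> (nat \<Rightarrow> nat \<Rightarrow> (nat \<Rightarrow> 'x) \<Rightarrow> real)
     \<Rightarrow> real \<Rightarrow> real \<Rightarrow> real \<Rightarrow> real \<Rightarrow> nat \<Rightarrow> (nat \<Rightarrow> nat \<Rightarrow> 'x) \<Rightarrow> bool" where
  "hatD K l u llr a b c d k \<omega> \<longleftrightarrow> hatT K l u llr a b c d k \<omega> = hatT1 K l u llr a c k \<omega>"

text \<open>calI A = min over i in A of I i; calJ A = min over j in [K] - A of J j.
  (Only used where the index set is nonempty.)\<close>
definition calI :: "(nat \<Rightarrow> real) \<Rightarrow> nat set \<Rightarrow> real" where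
  "calI I A = Min (I ` A)"

definition calJ :: "nat \<Rightarrow> (nat \<Rightarrow> real) \<Rightarrow> nat set \<Rightarrow> real" where
  "calJ K J A = Min (J ` ({1..K} - A))"

end

theory Submission
  imports Defs "HOL-Probability.Conditional_Expectation" "HOL-Library.Landau_Symbols"
begin

lemma sf_space: "space (stream_filt M k n) = space (strm_path_space M k)"
  by (simp add: stream_filt_def)

lemma restr_meas: "(\<lambda>x. restrict x {..<n}) \<in> measurable (strm_path_space M k) (\<Pi>\<^sub>M t\<in>{..<n}. M k)"
  unfolding strm_path_space_def by (rule measurable_restrict_subset) simp

lemma sf_sub: "sets (stream_filt M k n) \<subseteq> sets (strm_path_space M k)"
  unfolding stream_filt_def by (rule sets_image_in_sets[OF refl restr_meas])

lemma js_space: "space (joint_space K M) = (\<Pi>\<^sub>E k\<in>{1..K}. space (strm_path_space M k))"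
  by (simp add: joint_space_def space_PiM)

lemma pi_meas: "(\<lambda>\<omega>. \<lambda>k\<in>{1..K}. restrict (\<omega> k) {..<n}) \<in> measurable (joint_space K M) (\<Pi>\<^sub>M k\<in>{1..K}. \<Pi>\<^sub>M t\<in>{..<n}. M k)"
proof (rule measurable_restrict)
  fix k assume k: "k \<in> {1..K}"
  show "(\<lambda>\<omega>. restrict (\<omega> k) {..<n}) \<in> measurable (joint_space K M) (\<Pi>\<^sub>M t\<in>{..<n}. M k)"
    unfolding joint_space_def
    by (rule measurable_compose[OF measurable_component_singleton[OF k] restr_meas])
qed

lemma jf_sub: "sets (joint_filt K M n) \<subseteq> sets (joint_space K M)"
  unfolding joint_filt_def by (rule sets_image_in_sets[OF refl pi_meas])

lemma jf_space: "space (joint_filt K M n) = space (joint_space K M)"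
  by (simp add: joint_filt_def)

lemma pi_jf_meas: "(\<lambda>\<omega>. \<lambda>k\<in>{1..K}. restrict (\<omega> k) {..<n}) \<in> measurable (joint_filt K M n) (\<Pi>\<^sub>M k\<in>{1..K}. \<Pi>\<^sub>M t\<in>{..<n}. M k)"
  unfolding joint_filt_def
  by (rule measurable_vimage_algebra1) (use pi_meas[where K=K and M=M and n=n] in \<open>auto simp: measurable_def\<close>)

lemma comp_jf_meas:
  assumes k: "k \<in> {1..K}"
  shows "(\<lambda>\<omega>. \<omega> k) \<in> measurable (joint_filt K M n) (stream_filt M k n)"
proof -
  have "(\<lambda>\<omega>. (\<lambda>k\<in>{1..K}. restrict (\<omega> k) {..<n}) k) \<in> measurable (joint_filt K M n) (\<Pi>\<^sub>M t\<in>{..<n}. M k)"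
    by (rule measurable_compose[OF pi_jf_meas measurable_component_singleton[OF k]])
  then have m: "(\<lambda>\<omega>. restrict (\<omega> k) {..<n}) \<in> measurable (joint_filt K M n) (\<Pi>\<^sub>M t\<in>{..<n}. M k)"
    using k by simp
  show ?thesis unfolding stream_filt_def
    apply (rule measurable_vimage_algebra2)
    using k by (auto simp: jf_space js_space m)
qed

lemma jf_mono:
  assumes "m \<le> n"
  shows "sets (joint_filt K M m) \<subseteq> sets (joint_filt K M n)"
proof -
  have "(\<lambda>\<omega>. \<lambda>k\<in>{1..K}. restrict (\<omega> k) {..<m}) \<in> measurable (joint_filt K M n) (\<Pi>\<^sub>M k\<in>{1..K}. \<Pi>\<^sub>M t\<in>{..<m}. M k)"
  proof (rule measurable_restrict)
    fix k assume k: "k \<in> {1..K}"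
    have "(\<lambda>\<omega>. restrict (\<omega> k) {..<n}) \<in> measurable (joint_filt K M n) (\<Pi>\<^sub>M t\<in>{..<n}. M k)"
      using measurable_compose[OF pi_jf_meas[where K=K and M=M and n=n] measurable_component_singleton[OF k]] k by simp
    from measurable_compose[OF this measurable_restrict_subset[of "{..<m}" "{..<n}"]]
    show "(\<lambda>\<omega>. restrict (\<omega> k) {..<m}) \<in> measurable (joint_filt K M n) (\<Pi>\<^sub>M t\<in>{..<m}. M k)"
      using assms by (simp add: Int_absorb1)
  qed
  then show ?thesis unfolding joint_filt_def[of K M m]
    by (intro sets_image_in_sets) (auto simp: jf_space)
qed

lemma len_filter_map_upt:
  "length (filter P (map x [1..<Suc K])) = card {k\<in>{1..K}. P (x k)}"
proof -
  have "length (filter P (map x [1..<Suc K])) = length (filter (\<lambda>k. P (x k)) [1..<Suc K])"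
    by (simp add: filter_map comp_def)
  also have "\<dots> = card (set (filter (\<lambda>k. P (x k)) [1..<Suc K]))"
    by (rule distinct_card[symmetric]) simp
  also have "set (filter (\<lambda>k. P (x k)) [1..<Suc K]) = {k\<in>{1..K}. P (x k)}" by auto
  finally show ?thesis .
qed

lemma len_filter_rev_sort: "length (filter P (rev (sort xs))) = length (filter P xs)"
proof -
  have "mset (filter P (rev (sort xs))) = mset (filter P xs)" by (simp add: mset_filter)
  then show ?thesis by (metis size_mset)
qed

lemma rev_sort_desc:
  fixes xs :: "real list"
  assumes "i \<le> j" "j < length xs"
  shows "rev (sort xs) ! j \<le> rev (sort xs) ! i"
proof -
  have "rev (sort xs) ! j = sort xs ! (length xs - Suc j)" using assms by (simp add: rev_nth)
  moreover have "rev (sort xs) ! i = sort xs ! (length xs - Suc i)" using assms by (simp add: rev_nth)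
  ultimately show ?thesis using assms by (simp add: sorted_nth_mono)
qed

lemma kth_ge_count:
  assumes "1 \<le> m" "m \<le> K"
  shows "m \<le> card {k\<in>{1..K}. kth_largest K x m \<le> x k}"
proof -
  define ys where "ys = rev (sort (map x [1..<Suc K]))"
  have ly: "length ys = K" by (simp add: ys_def)
  define v where "v = ys ! (m - 1)"
  have "{..<m} \<subseteq> {i. i < length ys \<and> v \<le> ys ! i}"
    using assms ly unfolding v_def ys_def by (auto intro!: rev_sort_desc)
  then have "m \<le> card {i. i < length ys \<and> v \<le> ys ! i}"
    by (metis card_lessThan card_mono finite_Collect_conjI finite_Collect_less_nat)
  also have "\<dots> = length (filter (\<lambda>y. v \<le> y) ys)" by (simp add: length_filter_conv_card)
  also have "\<dots> = card {k\<in>{1..K}. v \<le> x k}"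
    unfolding ys_def len_filter_rev_sort len_filter_map_upt ..
  finally show ?thesis by (simp add: v_def ys_def kth_largest_def)
qed

lemma kth_le_count:
  assumes "1 \<le> m" "m \<le> K"
  shows "K - m + 1 \<le> card {k\<in>{1..K}. x k \<le> kth_largest K x m}"
proof -
  define ys where "ys = rev (sort (map x [1..<Suc K]))"
  have ly: "length ys = K" by (simp add: ys_def)
  define v where "v = ys ! (m - 1)"
  have "{m-1..<K} \<subseteq> {i. i < length ys \<and> ys ! i \<le> v}"
    using assms ly unfolding v_def ys_def by (auto intro!: rev_sort_desc)
  then have "card {m-1..<K} \<le> card {i. i < length ys \<and> ys ! i \<le> v}"
    by (intro card_mono) auto
  then have "K - m + 1 \<le> card {i. i < length ys \<and> ys ! i \<le> v}"
    using assms by simp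
  also have "\<dots> = length (filter (\<lambda>y. y \<le> v) ys)" by (simp add: length_filter_conv_card)
  also have "\<dots> = card {k\<in>{1..K}. x k \<le> v}"
    unfolding ys_def len_filter_rev_sort len_filter_map_upt ..
  finally show ?thesis by (simp add: v_def ys_def kth_largest_def)
qed

lemma kth_above_outside:
  assumes "A \<subseteq> {1..K}" "card A = l" "l < K"
  shows "\<exists>j\<in>{1..K} - A. kth_largest K x (l + 1) \<le> x j"
proof (rule ccontr)
  assume "\<not> ?thesis"
  then have "{k\<in>{1..K}. kth_largest K x (l+1) \<le> x k} \<subseteq> A" by auto
  then have "card {k\<in>{1..K}. kth_largest K x (l+1) \<le> x k} \<le> l"
    using assms by (metis card_mono finite_atLeastAtMost finite_subset)
  with kth_ge_count[of "l+1" K x] assms show False by simp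
qed

lemma kth_below_inside:
  assumes "A \<subseteq> {1..K}" "card A = u" "1 \<le> u" "u \<le> K"
  shows "\<exists>i\<in>A. x i \<le> kth_largest K x u"
proof (rule ccontr)
  assume "\<not> ?thesis"
  then have "{k\<in>{1..K}. x k \<le> kth_largest K x u} \<subseteq> {1..K} - A" by auto
  then have "card {k\<in>{1..K}. x k \<le> kth_largest K x u} \<le> card ({1..K} - A)"
    by (intro card_mono) auto
  also have "\<dots> = K - u" using assms by (simp add: card_Diff_subset finite_subset)
  finally show False using kth_le_count[of u K x] assms by simp
qed

definition QQ :: "(nat \<Rightarrow> 'a measure) \<Rightarrow> (nat \<Rightarrow> 'a measure) \<Rightarrow> nat set \<Rightarrow> nat \<Rightarrow> 'a measure" where
  "QQ P0 P1 A k = (if k \<in> A then P1 k else P0 k)"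

lemma PA_QQ: "PA K P0 P1 A = (\<Pi>\<^sub>M k\<in>{1..K}. QQ P0 P1 A k)"
  by (simp add: PA_def QQ_def)

locale laws =
  fixes K :: nat and M :: "nat \<Rightarrow> 'x measure" and P0 P1 :: "nat \<Rightarrow> (nat \<Rightarrow> 'x) measure"
  assumes laws: "\<And>k. k \<in> {1..K} \<Longrightarrow> prob_space (P0 k) \<and> prob_space (P1 k) \<and>
                 sets (P0 k) = sets (strm_path_space M k) \<and> sets (P1 k) = sets (strm_path_space M k)"
begin

lemma QQ_prob: "k \<in> {1..K} \<Longrightarrow> prob_space (QQ P0 P1 A k)"
  using laws by (simp add: QQ_def)

lemma QQ_sets: "k \<in> {1..K} \<Longrightarrow> sets (QQ P0 P1 A k) = sets (strm_path_space M k)"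
  using laws by (simp add: QQ_def)

lemma QQ_space: "k \<in> {1..K} \<Longrightarrow> space (QQ P0 P1 A k) = space (strm_path_space M k)"
  using QQ_sets sets_eq_imp_space_eq by blast

lemma PA_sets: "sets (PA K P0 P1 A) = sets (joint_space K M)"
  unfolding PA_QQ joint_space_def by (rule sets_PiM_cong) (auto simp: QQ_sets)

lemma PA_space: "space (PA K P0 P1 A) = space (joint_space K M)"
  using PA_sets sets_eq_imp_space_eq by blast

lemma PA_prob: "prob_space (PA K P0 P1 A)"
  unfolding PA_QQ by (rule prob_space_PiM) (simp add: QQ_prob)

lemma PA_marg:
  assumes k: "k \<in> {1..K}" and S: "S \<in> sets (strm_path_space M k)"
  shows "emeasure (PA K P0 P1 A) {\<omega>\<in>space (PA K P0 P1 A). \<omega> k \<in> S} = emeasure (QQ P0 P1 A k) S"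
proof -
  have "emeasure (QQ P0 P1 A k) S = emeasure (distr (PA K P0 P1 A) (QQ P0 P1 A k) (\<lambda>\<omega>. \<omega> k)) S"
    unfolding PA_QQ using distr_PiM_component[of "{1..K}" "QQ P0 P1 A" k] k QQ_prob by simp
  also have "\<dots> = emeasure (PA K P0 P1 A) ((\<lambda>\<omega>. \<omega> k) -` S \<inter> space (PA K P0 P1 A))"
    by (rule emeasure_distr) (use k S QQ_sets in \<open>auto simp: PA_QQ\<close>)
  finally show ?thesis by (simp add: Int_def conj_commute)
qed

lemma PA_marg_measure:
  assumes k: "k \<in> {1..K}" and S: "S \<in> sets (strm_path_space M k)"
  shows "measure (PA K P0 P1 A) {\<omega>\<in>space (PA K P0 P1 A). \<omega> k \<in> S} = measure (QQ P0 P1 A k) S"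
  using PA_marg[OF k S] by (simp add: measure_def)

lemma PA_AE:
  assumes k: "k \<in> {1..K}" and "AE x in QQ P0 P1 A k. P x"
  shows "AE \<omega> in PA K P0 P1 A. P (\<omega> k)"
  unfolding PA_QQ by (rule AE_PiM_component) (use assms QQ_prob in auto)

end

lemma UB:
  assumes "prob_space \<mu>" and T: "T \<in> measurable \<mu> (count_space UNIV)" and F: "finite F"
    and B: "\<And>f t. f \<in> F \<Longrightarrow> B f t \<in> sets \<mu>"
    and S: "\<And>f. f \<in> F \<Longrightarrow> summable (\<lambda>t. measure \<mu> (B f t))"
    and cov: "\<And>t. t \<ge> N0 \<Longrightarrow> {\<omega>\<in>space \<mu>. enat t < T \<omega>} \<subseteq> (\<Union>f\<in>F. B f t)"
  shows "(\<integral>\<^sup>+\<omega>. ennreal_of_enat (T \<omega>) \<partial>\<mu>) \<le> ennreal (real N0 + (\<Sum>f\<in>F. \<Sum>t. measure \<mu> (B f t)))"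
proof -
  interpret prob_space \<mu> by fact
  define h where "h t = (if t \<in> {..<N0} then 1 else 0) + (\<Sum>f\<in>F. measure \<mu> (B f t))" for t
  have h1: "(\<lambda>t. if t \<in> {..<N0} then 1::real else 0) sums (real N0)"
    using sums_If_finite_set[of "{..<N0}" "\<lambda>_. 1::real"] by simp
  have h2: "(\<lambda>t. \<Sum>f\<in>F. measure \<mu> (B f t)) sums (\<Sum>f\<in>F. \<Sum>t. measure \<mu> (B f t))"
    using sums_sum[of F "\<lambda>f t. measure \<mu> (B f t)"] S by (simp add: summable_sums)
  have hs: "h sums (real N0 + (\<Sum>f\<in>F. \<Sum>t. measure \<mu> (B f t)))"
    unfolding h_def by (rule sums_add[OF h1 h2])
  have hnn: "0 \<le> h t" for t unfolding h_def by (auto intro!: add_nonneg_nonneg sum_nonneg)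
  have le: "emeasure \<mu> {\<omega>\<in>space \<mu>. enat t < T \<omega>} \<le> ennreal (h t)" for t
  proof (cases "t < N0")
    case True
    then have "h t \<ge> 1" unfolding h_def by (auto intro!: sum_nonneg)
    then have "ennreal 1 \<le> ennreal (h t)" by (rule ennreal_leI)
    moreover have "emeasure \<mu> {\<omega>\<in>space \<mu>. enat t < T \<omega>} \<le> 1" by (rule emeasure_le_1)
    ultimately show ?thesis by (metis ennreal_1 order_trans)
  next
    case False
    have "emeasure \<mu> {\<omega>\<in>space \<mu>. enat t < T \<omega>} \<le> emeasure \<mu> (\<Union>f\<in>F. B f t)"
      using False cov[of t] B F by (intro emeasure_mono) auto
    also have "\<dots> \<le> (\<Sum>f\<in>F. emeasure \<mu> (B f t))"
      using B F by (intro emeasure_subadditive_finite) auto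
    also have "\<dots> = ennreal (\<Sum>f\<in>F. measure \<mu> (B f t))"
      using B by (simp add: emeasure_eq_measure sum_ennreal)
    also have "\<dots> \<le> ennreal (h t)" unfolding h_def by (auto intro!: ennreal_leI)
    finally show ?thesis .
  qed
  have "(\<integral>\<^sup>+\<omega>. ennreal_of_enat (T \<omega>) \<partial>\<mu>) = (\<Sum>t. emeasure \<mu> {\<omega>\<in>space \<mu>. enat t < T \<omega>})"
    using nn_integral_enat_function[OF T] by simp
  also have "\<dots> \<le> (\<Sum>t. ennreal (h t))"
    by (intro suminf_le le summableI)
  also have "\<dots> = ennreal (suminf h)"
    using hnn hs by (intro suminf_ennreal2) (auto simp: sums_iff)
  also have "suminf h = real N0 + (\<Sum>f\<in>F. \<Sum>t. measure \<mu> (B f t))"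
    using hs by (simp add: sums_iff)
  finally show ?thesis .
qed

locale llrs = laws K M P0 P1 for K M and P0 P1 :: "nat \<Rightarrow> (nat \<Rightarrow> 'x) measure" +
  fixes llr :: "nat \<Rightarrow> nat \<Rightarrow> (nat \<Rightarrow> 'x) \<Rightarrow> real"
  assumes llr: "\<And>k n. k \<in> {1..K} \<Longrightarrow> 1 \<le> n \<Longrightarrow>
                 llr k n \<in> borel_measurable (stream_filt M k n) \<and>
                 (\<forall>B\<in>sets (stream_filt M k n).
                    emeasure (P1 k) B = (\<integral>\<^sup>+ x\<in>B. ennreal (exp (llr k n x)) \<partial>P0 k))"
begin

lemma P0_sets: "k \<in> {1..K} \<Longrightarrow> sets (P0 k) = sets (strm_path_space M k)" using laws by blast
lemma P1_sets: "k \<in> {1..K} \<Longrightarrow> sets (P1 k) = sets (strm_path_space M k)" using laws by blast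
lemma P0_space: "k \<in> {1..K} \<Longrightarrow> space (P0 k) = space (strm_path_space M k)"
  using P0_sets sets_eq_imp_space_eq by blast
lemma P1_space: "k \<in> {1..K} \<Longrightarrow> space (P1 k) = space (strm_path_space M k)"
  using P1_sets sets_eq_imp_space_eq by blast

lemma llr_meas_sf: "k \<in> {1..K} \<Longrightarrow> 1 \<le> n \<Longrightarrow> llr k n \<in> borel_measurable (stream_filt M k n)"
  using llr by blast

lemma sub_P0: "k \<in> {1..K} \<Longrightarrow> subalgebra (P0 k) (stream_filt M k n)"
  unfolding subalgebra_def using sf_sub[of M k n] by (simp add: sf_space P0_space P0_sets)
lemma sub_P1: "k \<in> {1..K} \<Longrightarrow> subalgebra (P1 k) (stream_filt M k n)"
  unfolding subalgebra_def using sf_sub[of M k n] by (simp add: sf_space P1_space P1_sets)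

lemma llr_meas: "k \<in> {1..K} \<Longrightarrow> 1 \<le> n \<Longrightarrow> llr k n \<in> borel_measurable (strm_path_space M k)"
  using llr_meas_sf measurable_from_subalg[OF sub_P0] by (metis P0_sets measurable_cong_sets)

lemma dens1:
  assumes k: "k \<in> {1..K}" and n: "1 \<le> n" and g: "g \<in> borel_measurable (stream_filt M k n)"
  shows "(\<integral>\<^sup>+x. g x \<partial>P1 k) = (\<integral>\<^sup>+x. ennreal (exp (llr k n x)) * g x \<partial>P0 k)"
proof -
  let ?F = "stream_filt M k n"
  have lm[measurable]: "llr k n \<in> borel_measurable ?F" using llr_meas_sf[OF k n] .
  have eq: "restr_to_subalg (P1 k) ?F = density (restr_to_subalg (P0 k) ?F) (\<lambda>x. ennreal (exp (llr k n x)))"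
  proof (rule measure_eqI)
    show "sets (restr_to_subalg (P1 k) ?F) = sets (density (restr_to_subalg (P0 k) ?F) (\<lambda>x. ennreal (exp (llr k n x))))"
      using sub_P0[OF k] sub_P1[OF k] by (simp add: sets_restr_to_subalg)
    fix B assume "B \<in> sets (restr_to_subalg (P1 k) ?F)"
    then have B[measurable]: "B \<in> sets ?F" using sub_P1[OF k] by (simp add: sets_restr_to_subalg)
    have "emeasure (density (restr_to_subalg (P0 k) ?F) (\<lambda>x. ennreal (exp (llr k n x)))) B
        = (\<integral>\<^sup>+x. ennreal (exp (llr k n x)) * indicator B x \<partial>restr_to_subalg (P0 k) ?F)"
      using B sub_P0[OF k] by (subst emeasure_density) (auto simp: sets_restr_to_subalg measurable_in_subalg)
    also have "\<dots> = (\<integral>\<^sup>+x. ennreal (exp (llr k n x)) * indicator B x \<partial>P0 k)"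
      using B by (intro nn_integral_subalgebra2[OF sub_P0[OF k]]) measurable
    also have "\<dots> = emeasure (P1 k) B" using llr[OF k n] B by simp
    also have "\<dots> = emeasure (restr_to_subalg (P1 k) ?F) B"
      using B sub_P1[OF k] by (simp add: emeasure_restr_to_subalg)
    finally show "emeasure (restr_to_subalg (P1 k) ?F) B = emeasure (density (restr_to_subalg (P0 k) ?F) (\<lambda>x. ennreal (exp (llr k n x)))) B"
      by simp
  qed
  have "(\<integral>\<^sup>+x. g x \<partial>P1 k) = (\<integral>\<^sup>+x. g x \<partial>restr_to_subalg (P1 k) ?F)"
    using nn_integral_subalgebra2[OF sub_P1[OF k] g] by simp
  also have "\<dots> = (\<integral>\<^sup>+x. ennreal (exp (llr k n x)) * g x \<partial>restr_to_subalg (P0 k) ?F)"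
    unfolding eq using sub_P0[OF k] g
    by (subst nn_integral_density) (auto simp: measurable_in_subalg)
  also have "\<dots> = (\<integral>\<^sup>+x. ennreal (exp (llr k n x)) * g x \<partial>P0 k)"
    using g by (intro nn_integral_subalgebra2[OF sub_P0[OF k]]) measurable
  finally show ?thesis .
qed

definition cf :: "nat set \<Rightarrow> nat set \<Rightarrow> nat \<Rightarrow> real" where
  "cf A A' k = (if k \<in> A \<and> k \<notin> A' then 1 else if k \<in> A' \<and> k \<notin> A then -1 else 0)"

lemma comp_dens:
  assumes k: "k \<in> {1..K}" and n: "1 \<le> n" and C: "C \<in> sets (stream_filt M k n)"
  shows "emeasure (QQ P0 P1 A k) C = (\<integral>\<^sup>+x. indicator C x * ennreal (exp (cf A A' k * llr k n x)) \<partial>QQ P0 P1 A' k)"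
proof -
  have lm[measurable]: "llr k n \<in> borel_measurable (stream_filt M k n)" using llr_meas_sf[OF k n] .
  have Cs: "C \<in> sets (strm_path_space M k)" using C sf_sub by blast
  have [measurable]: "C \<in> sets (stream_filt M k n)" by (rule C)
  consider "k \<in> A \<longleftrightarrow> k \<in> A'" | "k \<in> A" "k \<notin> A'" | "k \<notin> A" "k \<in> A'" by blast
  then show ?thesis
  proof cases
    case 1
    then have "cf A A' k = 0" "QQ P0 P1 A k = QQ P0 P1 A' k" by (auto simp: cf_def QQ_def)
    then show ?thesis using Cs QQ_sets[OF k] by simp
  next
    case 2
    then have "cf A A' k = 1" "QQ P0 P1 A k = P1 k" "QQ P0 P1 A' k = P0 k" by (auto simp: cf_def QQ_def)
    then show ?thesis using llr[OF k n] C by (simp add: mult.commute)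
  next
    case 3
    then have cf: "cf A A' k = -1" "QQ P0 P1 A k = P0 k" "QQ P0 P1 A' k = P1 k" by (auto simp: cf_def QQ_def)
    have "(\<integral>\<^sup>+x. indicator C x * ennreal (exp (- llr k n x)) \<partial>P1 k)
        = (\<integral>\<^sup>+x. ennreal (exp (llr k n x)) * (indicator C x * ennreal (exp (- llr k n x))) \<partial>P0 k)"
      using C by (intro dens1[OF k n]) measurable
    also have "\<dots> = (\<integral>\<^sup>+x. indicator C x \<partial>P0 k)"
    proof (intro nn_integral_cong)
      fix x
      have "ennreal (exp (llr k n x)) * ennreal (exp (- llr k n x)) = 1"
        by (simp flip: ennreal_mult add: exp_minus)
      then show "ennreal (exp (llr k n x)) * (indicator C x * ennreal (exp (- llr k n x))) = indicator C x"
        by (metis (no_types, lifting) mult.commute mult.left_commute mult_1)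
    qed
    also have "\<dots> = emeasure (P0 k) C" using Cs P0_sets[OF k] by simp
    finally show ?thesis using cf by simp
  qed
qed

end

lemma prod_indicator_ennreal:
  "finite I \<Longrightarrow> (\<Prod>k\<in>I. indicator (C k) (\<omega> k) :: ennreal) = (if \<forall>k\<in>I. \<omega> k \<in> C k then 1 else 0)"
  by (induction I rule: finite_induct) auto

context llrs begin

definition Lam :: "nat set \<Rightarrow> nat set \<Rightarrow> nat \<Rightarrow> (nat \<Rightarrow> nat \<Rightarrow> 'x) \<Rightarrow> real" where
  "Lam A A' n \<omega> = (\<Sum>k\<in>{1..K}. cf A A' k * llr k n (\<omega> k))"

lemma llr_comp_meas: "k \<in> {1..K} \<Longrightarrow> 1 \<le> n \<Longrightarrow> (\<lambda>\<omega>. llr k n (\<omega> k)) \<in> borel_measurable (joint_filt K M n)"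
  by (rule measurable_compose[OF comp_jf_meas llr_meas_sf])

lemma Lam_meas: "1 \<le> n \<Longrightarrow> Lam A A' n \<in> borel_measurable (joint_filt K M n)"
  unfolding Lam_def[abs_def] using llr_comp_meas by (intro borel_measurable_sum borel_measurable_times) auto

definition QQ' :: "nat set \<Rightarrow> nat \<Rightarrow> (nat \<Rightarrow> 'x) measure" where
  "QQ' A k = (if k \<in> {1..K} then QQ P0 P1 A k else return (count_space UNIV) undefined)"

lemma PA_QQ': "PA K P0 P1 A = (\<Pi>\<^sub>M k\<in>{1..K}. QQ' A k)"
  unfolding PA_QQ by (rule PiM_cong) (auto simp: QQ'_def)

lemma psf: "product_sigma_finite (QQ' A)"
  unfolding product_sigma_finite_def
  by (auto simp: QQ'_def intro!: prob_space_imp_sigma_finite QQ_prob prob_space_return)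

lemma jf_gen:
  "sets (joint_filt K M n) = sigma_sets (space (joint_space K M))
     {(\<lambda>\<omega>. \<lambda>k\<in>{1..K}. restrict (\<omega> k) {..<n}) -` (\<Pi>\<^sub>E k\<in>{1..K}. X k) \<inter> space (joint_space K M) | X.
        (\<forall>k. X k \<in> sets (\<Pi>\<^sub>M t\<in>{..<n}. M k)) \<and> finite {k. X k \<noteq> space (\<Pi>\<^sub>M t\<in>{..<n}. M k)}}"
proof -
  let ?Mk = "\<lambda>k. \<Pi>\<^sub>M t\<in>{..<n}. M k"
  let ?Om = "space (joint_space K M)"
  let ?pi = "\<lambda>\<omega>. \<lambda>k\<in>{1..K}. restrict (\<omega> k) {..<n}"
  let ?G0 = "{(\<Pi>\<^sub>E k\<in>{1..K}. X k) | X. (\<forall>k. X k \<in> sets (?Mk k)) \<and> finite {k. X k \<noteq> space (?Mk k)}}"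
  let ?PE = "\<Pi>\<^sub>E k\<in>{1..K}. space (?Mk k)"
  have s: "sets (\<Pi>\<^sub>M k\<in>{1..K}. ?Mk k) = sigma_sets ?PE ?G0" by (rule sets_PiM_finite)
  have G0: "?G0 \<subseteq> Pow ?PE"
    by (auto simp: PiE_iff dest: sets.sets_into_space)
  have s2: "sets (\<Pi>\<^sub>M k\<in>{1..K}. ?Mk k) = sets (sigma ?PE ?G0)"
    using s G0 by (simp add: sets_measure_of)
  have pif: "?pi \<in> ?Om \<rightarrow> ?PE"
    using measurable_space[OF pi_meas[where K=K and M=M and n=n]] by (auto simp: space_PiM)
  have "joint_filt K M n = vimage_algebra ?Om ?pi (sigma ?PE ?G0)"
    unfolding joint_filt_def by (rule vimage_algebra_cong[OF refl refl s2])
  also have "\<dots> = sigma ?Om {?pi -` A \<inter> ?Om | A. A \<in> ?G0}"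
    by (rule vimage_algebra_sigma[OF G0 pif])
  finally have "sets (joint_filt K M n) = sets (sigma ?Om {?pi -` A \<inter> ?Om | A. A \<in> ?G0})"
    by simp
  also have "\<dots> = sigma_sets ?Om {?pi -` A \<inter> ?Om | A. A \<in> ?G0}"
    by (rule sets_measure_of) blast
  finally have "sets (joint_filt K M n) = sigma_sets ?Om {?pi -` A \<inter> ?Om | A. A \<in> ?G0}" .
  also have "{?pi -` A \<inter> ?Om | A. A \<in> ?G0} =
     {?pi -` (\<Pi>\<^sub>E k\<in>{1..K}. X k) \<inter> ?Om | X. (\<forall>k. X k \<in> sets (?Mk k)) \<and> finite {k. X k \<noteq> space (?Mk k)}}"
    by blast
  finally show ?thesis .
qed

lemma sub_PA: "subalgebra (PA K P0 P1 A) (joint_filt K M n)"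
  unfolding subalgebra_def using jf_sub[of K M n] by (simp add: jf_space PA_space PA_sets)

lemma gen_set_eq:
  assumes X: "\<And>k. X k \<in> sets (\<Pi>\<^sub>M t\<in>{..<n}. M k)"
  shows "(\<lambda>\<omega>. \<lambda>k\<in>{1..K}. restrict (\<omega> k) {..<n}) -` (\<Pi>\<^sub>E k\<in>{1..K}. X k) \<inter> space (joint_space K M)
       = (\<Pi>\<^sub>E k\<in>{1..K}. (\<lambda>x. restrict x {..<n}) -` X k \<inter> space (strm_path_space M k))"
  by (auto simp: js_space PiE_iff)

lemma dens_joint:
  assumes n: "1 \<le> n" and E: "E \<in> sets (joint_filt K M n)"
  shows "emeasure (PA K P0 P1 A) E = (\<integral>\<^sup>+\<omega>. ennreal (exp (Lam A A' n \<omega>)) * indicator E \<omega> \<partial>PA K P0 P1 A')"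
proof -
  let ?F = "joint_filt K M n"
  let ?Om = "space (joint_space K M)"
  let ?pi = "\<lambda>\<omega>. \<lambda>k\<in>{1..K}. restrict (\<omega> k) {..<n}"
  let ?Mk = "\<lambda>k. \<Pi>\<^sub>M t\<in>{..<n}. M k"
  let ?G = "{?pi -` (\<Pi>\<^sub>E k\<in>{1..K}. X k) \<inter> ?Om | X.
        (\<forall>k. X k \<in> sets (?Mk k)) \<and> finite {k. X k \<noteq> space (?Mk k)}}"
  have Lm[measurable]: "Lam A A' n \<in> borel_measurable ?F" by (rule Lam_meas[OF n])
  define mu1 where "mu1 = restr_to_subalg (PA K P0 P1 A) ?F"
  define mu2 where "mu2 = density (restr_to_subalg (PA K P0 P1 A') ?F) (\<lambda>\<omega>. ennreal (exp (Lam A A' n \<omega>)))"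
  have Gsub: "?G \<subseteq> sets ?F"
  proof
    fix S assume "S \<in> ?G"
    then obtain X where S: "S = ?pi -` (\<Pi>\<^sub>E k\<in>{1..K}. X k) \<inter> ?Om" and X: "\<forall>k. X k \<in> sets (?Mk k)" by blast
    have "(\<Pi>\<^sub>E k\<in>{1..K}. X k) \<in> sets (\<Pi>\<^sub>M k\<in>{1..K}. ?Mk k)" using X by (intro sets_PiM_I_finite) auto
    then show "S \<in> sets ?F" unfolding S joint_filt_def by (rule in_vimage_algebra)
  qed
  have eqG: "emeasure mu1 S = emeasure mu2 S" if "S \<in> ?G" for S
  proof -
    from that obtain X where S: "S = ?pi -` (\<Pi>\<^sub>E k\<in>{1..K}. X k) \<inter> ?Om" and X: "\<forall>k. X k \<in> sets (?Mk k)" by blast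
    define C where "C k = (\<lambda>x. restrict x {..<n}) -` X k \<inter> space (strm_path_space M k)" for k
    have SC: "S = (\<Pi>\<^sub>E k\<in>{1..K}. C k)" unfolding S C_def by (rule gen_set_eq) (use X in auto)
    have SF[measurable]: "S \<in> sets ?F" using that Gsub by blast
    have Csf: "C k \<in> sets (stream_filt M k n)" for k
      unfolding C_def stream_filt_def using X by (intro in_vimage_algebra) auto
    have Cs: "C k \<in> sets (QQ' B k)" if "k \<in> {1..K}" for k B
      using that Csf[of k] sf_sub[of M k n] by (auto simp: QQ'_def QQ_sets)
    interpret A': product_sigma_finite "QQ' A'" by (rule psf)
    interpret AA: product_sigma_finite "QQ' A" by (rule psf)
    have "emeasure mu1 S = emeasure (PA K P0 P1 A) S"
      unfolding mu1_def by (rule emeasure_restr_to_subalg[OF sub_PA SF])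
    also have "\<dots> = (\<Prod>k\<in>{1..K}. emeasure (QQ' A k) (C k))"
      unfolding PA_QQ' SC by (rule AA.emeasure_PiM) (auto intro: Cs)
    also have "\<dots> = (\<Prod>k\<in>{1..K}. \<integral>\<^sup>+x. indicator (C k) x * ennreal (exp (cf A A' k * llr k n x)) \<partial>QQ' A' k)"
      by (intro prod.cong refl) (simp add: QQ'_def comp_dens[OF _ n Csf])
    also have "\<dots> = (\<integral>\<^sup>+\<omega>. (\<Prod>k\<in>{1..K}. indicator (C k) (\<omega> k) * ennreal (exp (cf A A' k * llr k n (\<omega> k)))) \<partial>PA K P0 P1 A')"
      unfolding PA_QQ'
    proof (rule A'.product_nn_integral_prod[symmetric])
      fix k assume k: "k \<in> {1..K}"
      have [measurable]: "C k \<in> sets (strm_path_space M k)" using Csf sf_sub by blast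
      have [measurable]: "llr k n \<in> borel_measurable (strm_path_space M k)" by (rule llr_meas[OF k n])
      have "(\<lambda>x. indicator (C k) x * ennreal (exp (cf A A' k * llr k n x))) \<in> borel_measurable (strm_path_space M k)"
        by measurable
      then show "(\<lambda>x. indicator (C k) x * ennreal (exp (cf A A' k * llr k n x))) \<in> borel_measurable (QQ' A' k)"
        using k by (simp add: QQ'_def measurable_cong_sets[OF QQ_sets[OF k] refl])
    qed simp
    also have "\<dots> = (\<integral>\<^sup>+\<omega>. ennreal (exp (Lam A A' n \<omega>)) * indicator S \<omega> \<partial>PA K P0 P1 A')"
    proof (intro nn_integral_cong)
      fix \<omega> assume "\<omega> \<in> space (PA K P0 P1 A')"
      then have om: "\<omega> \<in> (\<Pi>\<^sub>E k\<in>{1..K}. space (strm_path_space M k))" by (simp add: PA_space js_space)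
      have "(\<Prod>k\<in>{1..K}. indicator (C k) (\<omega> k) * ennreal (exp (cf A A' k * llr k n (\<omega> k))))
          = (\<Prod>k\<in>{1..K}. indicator (C k) (\<omega> k)) * (\<Prod>k\<in>{1..K}. ennreal (exp (cf A A' k * llr k n (\<omega> k))))"
        by (rule prod.distrib)
      also have "(\<Prod>k\<in>{1..K}. ennreal (exp (cf A A' k * llr k n (\<omega> k)))) = ennreal (exp (Lam A A' n \<omega>))"
        by (subst prod_ennreal) (auto simp: Lam_def exp_sum)
      also have "(\<Prod>k\<in>{1..K}. indicator (C k) (\<omega> k) :: ennreal) = indicator S \<omega>"
        unfolding prod_indicator_ennreal[OF finite_atLeastAtMost] SC using om by (auto simp: PiE_iff indicator_def)
      finally show "(\<Prod>k\<in>{1..K}. indicator (C k) (\<omega> k) * ennreal (exp (cf A A' k * llr k n (\<omega> k))))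
          = ennreal (exp (Lam A A' n \<omega>)) * indicator S \<omega>" by (simp add: mult.commute)
    qed
    also have "\<dots> = (\<integral>\<^sup>+\<omega>. ennreal (exp (Lam A A' n \<omega>)) * indicator S \<omega> \<partial>restr_to_subalg (PA K P0 P1 A') ?F)"
      by (rule nn_integral_subalgebra2[OF sub_PA, symmetric]) measurable
    also have "\<dots> = emeasure mu2 S"
      unfolding mu2_def using sub_PA
      by (subst emeasure_density) (auto simp: sets_restr_to_subalg measurable_in_subalg)
    finally show ?thesis .
  qed
  have Om_G: "?Om \<in> ?G"
  proof -
    have "?Om = ?pi -` (\<Pi>\<^sub>E k\<in>{1..K}. space (?Mk k)) \<inter> ?Om"
      using measurable_space[OF pi_meas[where K=K and M=M and n=n]] by (auto simp: space_PiM)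
    then show ?thesis by (intro CollectI exI[where x="\<lambda>k. space (?Mk k)"]) auto
  qed
  have "mu1 = mu2"
  proof (rule measure_eqI_generator_eq[where E="?G" and \<Omega>="?Om" and A="\<lambda>_. ?Om"])
    show "Int_stable ?G"
    proof (rule Int_stableI)
      fix S1 S2 assume S1G: "S1 \<in> ?G" and S2G: "S2 \<in> ?G"
      from S1G obtain X where S1: "S1 = ?pi -` (\<Pi>\<^sub>E k\<in>{1..K}. X k) \<inter> ?Om" and X: "\<forall>k. X k \<in> sets (?Mk k)"
          "finite {k. X k \<noteq> space (?Mk k)}" by auto
      from S2G obtain Y where S2: "S2 = ?pi -` (\<Pi>\<^sub>E k\<in>{1..K}. Y k) \<inter> ?Om" and Y: "\<forall>k. Y k \<in> sets (?Mk k)"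
          "finite {k. Y k \<noteq> space (?Mk k)}" by auto
      have 1: "S1 \<inter> S2 = ?pi -` (\<Pi>\<^sub>E k\<in>{1..K}. X k \<inter> Y k) \<inter> ?Om"
        unfolding S1 S2 PiE_Int[symmetric] by auto
      have 2: "\<forall>k. X k \<inter> Y k \<in> sets (?Mk k)" using X Y by auto
      have 3: "finite {k. X k \<inter> Y k \<noteq> space (?Mk k)}"
        by (rule finite_subset[OF _ finite_UnI[OF X(2) Y(2)]]) auto
      show "S1 \<inter> S2 \<in> ?G"
        by (rule CollectI, rule exI[where x="\<lambda>k. X k \<inter> Y k"]) (use 1 2 3 in simp)
    qed
    show "?G \<subseteq> Pow ?Om" by auto
    show "\<And>X. X \<in> ?G \<Longrightarrow> emeasure mu1 X = emeasure mu2 X" by (rule eqG)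
    show "sets mu1 = sigma_sets ?Om ?G"
      unfolding mu1_def by (simp add: sets_restr_to_subalg[OF sub_PA] jf_gen)
    show "sets mu2 = sigma_sets ?Om ?G"
      unfolding mu2_def by (simp add: sets_restr_to_subalg[OF sub_PA] jf_gen)
    show "range (\<lambda>_. ?Om) \<subseteq> ?G" using Om_G by auto
    show "(\<Union>i::nat. ?Om) = ?Om" by simp
    show "\<And>i::nat. emeasure mu1 ?Om \<noteq> \<infinity>"
    proof -
      interpret prob_space "PA K P0 P1 A" by (rule PA_prob)
      have "?Om \<in> sets ?F" using Om_G Gsub by blast
      then show "\<And>i::nat. emeasure mu1 ?Om \<noteq> \<infinity>"
        unfolding mu1_def by (simp add: emeasure_restr_to_subalg[OF sub_PA])
    qed
  qed
  have [measurable]: "E \<in> sets ?F" by (rule E)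
  have "emeasure (PA K P0 P1 A) E = emeasure mu1 E"
    unfolding mu1_def by (rule emeasure_restr_to_subalg[OF sub_PA E, symmetric])
  also have "\<dots> = emeasure mu2 E" by (simp add: \<open>mu1 = mu2\<close>)
  also have "\<dots> = (\<integral>\<^sup>+\<omega>. ennreal (exp (Lam A A' n \<omega>)) * indicator E \<omega> \<partial>restr_to_subalg (PA K P0 P1 A') ?F)"
    unfolding mu2_def using sub_PA
    by (subst emeasure_density) (auto simp: sets_restr_to_subalg measurable_in_subalg)
  also have "\<dots> = (\<integral>\<^sup>+\<omega>. ennreal (exp (Lam A A' n \<omega>)) * indicator E \<omega> \<partial>PA K P0 P1 A')"
    by (rule nn_integral_subalgebra2[OF sub_PA]) measurable
  finally show ?thesis .
qed

end

lemma enat_meas: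
  assumes h: "\<And>n. {\<omega>\<in>space M. T \<omega> \<le> enat n} \<in> sets M"
  shows "T \<in> measurable M (count_space UNIV)"
proof -
  have lt: "{\<omega>\<in>space M. T \<omega> < enat n} = (\<Union>m\<in>{..<n}. {\<omega>\<in>space M. T \<omega> \<le> enat m})" for n
  proof safe
    fix \<omega> assume "\<omega> \<in> space M" "T \<omega> < enat n"
    then obtain m where "T \<omega> = enat m" "m < n" by (cases "T \<omega>") auto
    then show "\<omega> \<in> (\<Union>m\<in>{..<n}. {\<omega>\<in>space M. T \<omega> \<le> enat m})" using \<open>\<omega> \<in> space M\<close> by auto
  qed (auto intro: le_less_trans)
  have "T -` {a} \<inter> space M \<in> sets M" for a
  proof (cases a)
    case (enat n)
    have "T -` {a} \<inter> space M = {\<omega>\<in>space M. T \<omega> \<le> enat n} - {\<omega>\<in>space M. T \<omega> < enat n}"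
      using enat by auto
    then show ?thesis using h lt by auto
  next
    case infinity
    have "T -` {a} \<inter> space M = space M - (\<Union>n. {\<omega>\<in>space M. T \<omega> \<le> enat n})"
    proof -
      have "x = (\<infinity>::enat) \<longleftrightarrow> (\<forall>n. \<not> x \<le> enat n)" for x
      proof
        assume "x = \<infinity>" then show "\<forall>n. \<not> x \<le> enat n" by simp
      next
        assume h: "\<forall>n. \<not> x \<le> enat n"
        show "x = \<infinity>"
        proof (cases x)
          case (enat m) with h show ?thesis by (metis order_refl)
        qed simp
      qed
      then show ?thesis using infinity by blast
    qed
    then show ?thesis using h by auto
  qed
  then show ?thesis by (subst measurable_count_space_eq_countable) auto
qed

context llrs begin

lemma lower_core:
  fixes T :: "(nat \<Rightarrow> nat \<Rightarrow> 'x) \<Rightarrow> enat" and D :: "(nat \<Rightarrow> nat \<Rightarrow> 'x) \<Rightarrow> bool"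
  assumes T1: "\<And>\<omega>. \<omega> \<in> space (joint_space K M) \<Longrightarrow> 1 \<le> T \<omega>"
    and Tn: "\<And>n. {\<omega>\<in>space (joint_space K M). T \<omega> \<le> enat n} \<in> sets (joint_filt K M n)"
    and Dn: "\<And>n. {\<omega>\<in>space (joint_space K M). D \<omega> \<and> T \<omega> \<le> enat n} \<in> sets (joint_filt K M n)"
    and Ds: "{\<omega>\<in>space (joint_space K M). D \<omega>} \<in> sets (joint_space K M)"
  shows "emeasure (PA K P0 P1 A) {\<omega>\<in>space (joint_space K M). T \<omega> \<le> enat N}
     \<le> emeasure (PA K P0 P1 A) {\<omega>\<in>space (joint_space K M). D \<omega> \<noteq> v}
       + ennreal (exp L) * emeasure (PA K P0 P1 A') {\<omega>\<in>space (joint_space K M). D \<omega> = v}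
       + emeasure (PA K P0 P1 A) {\<omega>\<in>space (joint_space K M). \<exists>n\<in>{1..N}. L \<le> Lam A A' n \<omega>}"
proof -
  let ?Om = "space (joint_space K M)"
  let ?PA = "PA K P0 P1 A" and ?PA' = "PA K P0 P1 A'"
  define E where "E n = {\<omega>\<in>?Om. D \<omega> = v \<and> T \<omega> = enat n \<and> Lam A A' n \<omega> < L}" for n
  define B2 where "B2 = {\<omega>\<in>?Om. \<exists>n\<in>{1..N}. L \<le> Lam A A' n \<omega>}"
  define G where "G = {\<omega>\<in>?Om. D \<omega> = v}"
  define NG where "NG = {\<omega>\<in>?Om. D \<omega> \<noteq> v}"
  have js: "sets (joint_filt K M n) \<subseteq> sets (joint_space K M)" for n by (rule jf_sub)
  have Gn: "{\<omega>\<in>?Om. D \<omega> = v \<and> T \<omega> \<le> enat n} \<in> sets (joint_filt K M n)" for n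
  proof (cases v)
    case True then show ?thesis using Dn[of n] by simp
  next
    case False
    have "{\<omega>\<in>?Om. D \<omega> = v \<and> T \<omega> \<le> enat n} = {\<omega>\<in>?Om. T \<omega> \<le> enat n} - {\<omega>\<in>?Om. D \<omega> \<and> T \<omega> \<le> enat n}"
      using False by auto
    then show ?thesis using Tn[of n] Dn[of n] by auto
  qed
  have En: "E n \<in> sets (joint_filt K M n)" if n: "1 \<le> n" for n
  proof -
    have "E n = ({\<omega>\<in>?Om. D \<omega> = v \<and> T \<omega> \<le> enat n} - {\<omega>\<in>?Om. T \<omega> \<le> enat (n - 1)})
                 \<inter> {\<omega>\<in>space (joint_filt K M n). Lam A A' n \<omega> < L}"
    proof -
      have h: "(x = enat n) \<longleftrightarrow> (x \<le> enat n \<and> \<not> x \<le> enat (n - 1))" for x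
        using n by (cases x) auto
      show ?thesis unfolding E_def h by (auto simp: jf_space)
    qed
    moreover have "{\<omega>\<in>?Om. T \<omega> \<le> enat (n - 1)} \<in> sets (joint_filt K M n)"
      using Tn[of "n-1"] jf_mono[of "n-1" n K M] by auto
    moreover have "{\<omega>\<in>space (joint_filt K M n). Lam A A' n \<omega> < L} \<in> sets (joint_filt K M n)"
      using Lam_meas[OF n, of A A'] by measurable
    ultimately show ?thesis using Gn[of n] by auto
  qed
  have Es: "E n \<in> sets (joint_space K M)" if "1 \<le> n" for n using En[OF that] js by blast
  have B2s: "B2 \<in> sets (joint_space K M)"
  proof -
    have "B2 = (\<Union>n\<in>{1..N}. {\<omega>\<in>space (joint_filt K M n). L \<le> Lam A A' n \<omega>})"
      unfolding B2_def by (auto simp: jf_space)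
    moreover have "{\<omega>\<in>space (joint_filt K M n). L \<le> Lam A A' n \<omega>} \<in> sets (joint_space K M)" if "n \<in> {1..N}" for n
      using Lam_meas[of n A A'] that js[of n] by (auto intro: measurable_sets)
    ultimately show ?thesis by auto
  qed
  have Gs: "G \<in> sets (joint_space K M)"
  proof (cases v)
    case True then show ?thesis using Ds by (simp add: G_def)
  next
    case False
    then have "G = ?Om - {\<omega>\<in>?Om. D \<omega>}" by (auto simp: G_def)
    then show ?thesis using Ds by auto
  qed
  have NGs: "NG \<in> sets (joint_space K M)"
  proof -
    have "NG = ?Om - G" by (auto simp: G_def NG_def)
    then show ?thesis using Gs by auto
  qed
  have cover: "{\<omega>\<in>?Om. T \<omega> \<le> enat N} \<subseteq> NG \<union> (\<Union>n\<in>{1..N}. E n) \<union> B2"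
  proof
    fix \<omega> assume w: "\<omega> \<in> {\<omega>\<in>?Om. T \<omega> \<le> enat N}"
    then obtain m where m: "T \<omega> = enat m" "m \<le> N" by (cases "T \<omega>") auto
    have "1 \<le> m" using T1[of \<omega>] w m by (simp add: one_enat_def)
    then show "\<omega> \<in> NG \<union> (\<Union>n\<in>{1..N}. E n) \<union> B2"
      using w m unfolding NG_def E_def B2_def by (cases "D \<omega> = v"; cases "Lam A A' m \<omega> < L") (auto simp: not_less)
  qed
  have Ebound: "emeasure ?PA (E n) \<le> ennreal (exp L) * (\<integral>\<^sup>+\<omega>. indicator (E n) \<omega> \<partial>?PA')" if n: "1 \<le> n" for n
  proof -
    have "emeasure ?PA (E n) = (\<integral>\<^sup>+\<omega>. ennreal (exp (Lam A A' n \<omega>)) * indicator (E n) \<omega> \<partial>?PA')"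
      by (rule dens_joint[OF n En[OF n]])
    also have "\<dots> \<le> (\<integral>\<^sup>+\<omega>. ennreal (exp L) * indicator (E n) \<omega> \<partial>?PA')"
      by (intro nn_integral_mono) (auto simp: E_def indicator_def intro!: ennreal_leI)
    also have "\<dots> = ennreal (exp L) * (\<integral>\<^sup>+\<omega>. indicator (E n) \<omega> \<partial>?PA')"
      using Es[OF n] by (intro nn_integral_cmult borel_measurable_indicator) (simp add: PA_sets)
    finally show ?thesis .
  qed
  have sumE: "(\<Sum>n\<in>{1..N}. \<integral>\<^sup>+\<omega>. indicator (E n) \<omega> \<partial>?PA') \<le> emeasure ?PA' G"
  proof -
    have "(\<Sum>n\<in>{1..N}. \<integral>\<^sup>+\<omega>. indicator (E n) \<omega> \<partial>?PA') = (\<integral>\<^sup>+\<omega>. (\<Sum>n\<in>{1..N}. indicator (E n) \<omega>) \<partial>?PA')"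
      using Es by (intro nn_integral_sum[symmetric] borel_measurable_indicator) (auto simp: PA_sets)
    also have "\<dots> \<le> (\<integral>\<^sup>+\<omega>. indicator G \<omega> \<partial>?PA')"
    proof (intro nn_integral_mono)
      fix \<omega>
      show "(\<Sum>n\<in>{1..N}. indicator (E n) \<omega>) \<le> (indicator G \<omega> :: ennreal)"
      proof (cases "\<exists>j\<in>{1..N}. \<omega> \<in> E j")
        case True
        then obtain j where j: "j \<in> {1..N}" "\<omega> \<in> E j" by blast
        have dj: "disjoint_family_on E {1..N}"
          unfolding disjoint_family_on_def E_def by auto
        have "(\<Sum>n\<in>{1..N}. indicator (E n) \<omega>) = (\<Sum>n\<in>{1..N}. 1 * indicator (E n) \<omega> :: ennreal)" by simp
        also have "\<dots> = 1" by (rule sum_indicator_disjoint_family[OF dj j(2) _ j(1)]) simp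
        finally show ?thesis using j by (auto simp: E_def G_def)
      next
        case False
        then have "(\<Sum>n\<in>{1..N}. indicator (E n) \<omega> :: ennreal) = 0" by (intro sum.neutral) auto
        then show ?thesis by simp
      qed
    qed
    also have "\<dots> = emeasure ?PA' G" using Gs by (simp add: PA_sets)
    finally show ?thesis .
  qed
  have "emeasure ?PA {\<omega>\<in>?Om. T \<omega> \<le> enat N} \<le> emeasure ?PA (NG \<union> (\<Union>n\<in>{1..N}. E n) \<union> B2)"
    using cover NGs Es B2s by (intro emeasure_mono) (auto simp: PA_sets)
  also have "\<dots> \<le> emeasure ?PA NG + emeasure ?PA (\<Union>n\<in>{1..N}. E n) + emeasure ?PA B2"
    using NGs Es B2s
  proof -
    have U: "(\<Union>n\<in>{1..N}. E n) \<in> sets ?PA" using Es by (auto simp: PA_sets)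
    have "emeasure ?PA (NG \<union> (\<Union>n\<in>{1..N}. E n) \<union> B2) \<le> emeasure ?PA (NG \<union> (\<Union>n\<in>{1..N}. E n)) + emeasure ?PA B2"
      using U NGs B2s by (intro emeasure_subadditive) (auto simp: PA_sets)
    also have "emeasure ?PA (NG \<union> (\<Union>n\<in>{1..N}. E n)) \<le> emeasure ?PA NG + emeasure ?PA (\<Union>n\<in>{1..N}. E n)"
      using U NGs by (intro emeasure_subadditive) (auto simp: PA_sets)
    finally show ?thesis by (simp add: add_mono)
  qed
  also have "emeasure ?PA (\<Union>n\<in>{1..N}. E n) \<le> (\<Sum>n\<in>{1..N}. emeasure ?PA (E n))"
    using Es by (intro emeasure_subadditive_finite) (auto simp: PA_sets)
  also have "\<dots> \<le> (\<Sum>n\<in>{1..N}. ennreal (exp L) * (\<integral>\<^sup>+\<omega>. indicator (E n) \<omega> \<partial>?PA'))"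
    by (intro sum_mono Ebound) auto
  also have "\<dots> = ennreal (exp L) * (\<Sum>n\<in>{1..N}. \<integral>\<^sup>+\<omega>. indicator (E n) \<omega> \<partial>?PA')"
    by (simp add: sum_distrib_left)
  also have "\<dots> \<le> ennreal (exp L) * emeasure ?PA' G"
    by (intro mult_left_mono sumE) auto
  finally show ?thesis unfolding NG_def G_def B2_def by (simp add: add_mono)
qed

end

lemma meas_tendsto0:
  assumes "prob_space \<mu>" and E: "\<And>N. E N \<in> sets \<mu>"
    and ae: "AE \<omega> in \<mu>. eventually (\<lambda>N. \<omega> \<notin> E N) sequentially"
  shows "(\<lambda>N. measure \<mu> (E N)) \<longlonglongrightarrow> 0"
proof -
  interpret prob_space \<mu> by fact
  have "(\<lambda>N. integral\<^sup>L \<mu> (indicator (E N) :: _ \<Rightarrow> real)) \<longlonglongrightarrow> integral\<^sup>L \<mu> (\<lambda>_. 0::real)"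
  proof (rule integral_dominated_convergence[where w="\<lambda>_. 1"])
    show "AE x in \<mu>. (\<lambda>N. indicator (E N) x :: real) \<longlonglongrightarrow> 0"
      using ae
    proof eventually_elim
      fix x assume "\<forall>\<^sub>F N in sequentially. x \<notin> E N"
      then have "\<forall>\<^sub>F N in sequentially. indicator (E N) x = (0::real)"
        by (rule eventually_mono) auto
      then show "(\<lambda>N. indicator (E N) x :: real) \<longlonglongrightarrow> 0" by (rule tendsto_eventually)
    qed
    show "AE x in \<mu>. norm (indicator (E N) x :: real) \<le> 1" for N by (auto simp: indicator_def)
  qed (use E in auto)
  then show ?thesis using E by (simp add: Int_absorb2 sets.sets_into_space)
qed

lemma maxbound_event:
  fixes \<Lambda> :: "nat \<Rightarrow> real"
  assumes R: "R > 0" and e: "\<epsilon> > 0" and h: "\<forall>\<delta>>0. eventually (\<lambda>n. \<Lambda> n \<le> (R + \<delta>) * real n) sequentially"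
  shows "eventually (\<lambda>N. \<not> (\<exists>n\<in>{1..N}. (1 + \<epsilon>) * R * real N \<le> \<Lambda> n)) sequentially"
proof -
  define \<delta> where "\<delta> = \<epsilon> * R / 2"
  have d: "\<delta> > 0" "\<delta> < \<epsilon> * R" using R e by (auto simp: \<delta>_def)
  obtain n0 where n0: "\<And>n. n \<ge> n0 \<Longrightarrow> \<Lambda> n \<le> (R + \<delta>) * real n"
    using h d(1) by (auto simp: eventually_sequentially)
  define Mx where "Mx = (\<Sum>n<n0. \<bar>\<Lambda> n\<bar>)"
  define N1 where "N1 = nat \<lceil>Mx / ((1 + \<epsilon>) * R)\<rceil> + 1 + n0"
  have pos: "(1 + \<epsilon>) * R > 0" using R e by simp
  show ?thesis unfolding eventually_sequentially
  proof (intro exI[of _ N1] allI impI notI)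
    fix N assume N: "N1 \<le> N" and "\<exists>n\<in>{1..N}. (1 + \<epsilon>) * R * real N \<le> \<Lambda> n"
    then obtain n where n: "n \<in> {1..N}" "(1 + \<epsilon>) * R * real N \<le> \<Lambda> n" by blast
    have "real N \<ge> Mx / ((1 + \<epsilon>) * R) + 1"
      using N unfolding N1_def by linarith
    then have big: "(1 + \<epsilon>) * R * real N > Mx"
      using pos by (simp add: field_simps)
    show False
    proof (cases "n < n0")
      case True
      have "\<Lambda> n \<le> \<bar>\<Lambda> n\<bar>" by simp
      also have "\<bar>\<Lambda> n\<bar> \<le> Mx" unfolding Mx_def using True
        by (intro member_le_sum) auto
      finally show False using n big by simp
    next
      case False
      then have "\<Lambda> n \<le> (R + \<delta>) * real n" using n0 by simp
      also have "\<dots> \<le> (R + \<delta>) * real N" using n R d by (intro mult_left_mono) auto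
      also have "\<dots> < (1 + \<epsilon>) * R * real N"
      proof -
        have "real N > 0" using n by auto
        moreover have "R + \<delta> < (1 + \<epsilon>) * R" using d by (simp add: algebra_simps)
        ultimately show ?thesis by simp
      qed
      finally show False using n by simp
    qed
  qed
qed

locale setting = llrs K M P0 P1 llr for K M and P0 P1 :: "nat \<Rightarrow> (nat \<Rightarrow> 'x) measure" and llr +
  fixes I J :: "nat \<Rightarrow> real"
  assumes IJpos: "\<And>k. k \<in> {1..K} \<Longrightarrow> 0 < I k \<and> 0 < J k"
    and limsupI: "\<And>k. k \<in> {1..K} \<Longrightarrow>
                 AE x in P1 k. limsup (\<lambda>n. ereal (llr k n x / real n)) \<le> ereal (I k)"
    and limsupJ: "\<And>k. k \<in> {1..K} \<Longrightarrow>
                 AE x in P0 k. limsup (\<lambda>n. ereal (- llr k n x / real n)) \<le> ereal (J k)"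
begin

lemma limsup_to_ev:
  fixes f :: "nat \<Rightarrow> real"
  assumes "limsup (\<lambda>n. ereal (f n / real n)) \<le> ereal R"
  shows "\<forall>\<delta>>0. eventually (\<lambda>n. f n \<le> (R + \<delta>) * real n) sequentially"
proof (intro allI impI)
  fix \<delta> :: real assume d: "\<delta> > 0"
  have "ereal R < ereal (R + \<delta>)" using d by simp
  with assms have "limsup (\<lambda>n. ereal (f n / real n)) < ereal (R + \<delta>)"
    by (rule order.strict_trans1)
  then have "eventually (\<lambda>n. ereal (f n / real n) < ereal (R + \<delta>)) sequentially"
    by (rule Limsup_lessD)
  moreover have "eventually (\<lambda>n. n \<ge> (1::nat)) sequentially" by (rule eventually_ge_at_top)
  ultimately show "eventually (\<lambda>n. f n \<le> (R + \<delta>) * real n) sequentially"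
  proof eventually_elim
    case (elim n)
    then have "f n / real n < R + \<delta>" by simp
    then show ?case using elim(2) by (simp add: divide_less_eq)
  qed
qed

lemma AE_I: "k \<in> {1..K} \<Longrightarrow> AE x in P1 k. \<forall>\<delta>>0. eventually (\<lambda>n. llr k n x \<le> (I k + \<delta>) * real n) sequentially"
proof -
  assume k: "k \<in> {1..K}"
  show ?thesis using limsupI[OF k] by (rule eventually_mono) (rule limsup_to_ev)
qed

lemma AE_J: "k \<in> {1..K} \<Longrightarrow> AE x in P0 k. \<forall>\<delta>>0. eventually (\<lambda>n. - llr k n x \<le> (J k + \<delta>) * real n) sequentially"
proof -
  assume k: "k \<in> {1..K}"
  show ?thesis using limsupJ[OF k] by (rule eventually_mono) (rule limsup_to_ev[where f="\<lambda>n. - llr k n _"])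
qed

definition rate :: "nat set \<Rightarrow> nat set \<Rightarrow> nat \<Rightarrow> real" where
  "rate A A' k = (if k \<in> A \<and> k \<notin> A' then I k else if k \<in> A' \<and> k \<notin> A then J k else 0)"

definition Rt :: "nat set \<Rightarrow> nat set \<Rightarrow> real" where
  "Rt A A' = (\<Sum>k\<in>{1..K}. rate A A' k)"

lemma AE_comp: "k \<in> {1..K} \<Longrightarrow> AE \<omega> in PA K P0 P1 A. \<forall>\<delta>>0. eventually
   (\<lambda>n. cf A A' k * llr k n (\<omega> k) \<le> (rate A A' k + \<delta>) * real n) sequentially"
proof -
  assume k: "k \<in> {1..K}"
  consider "k \<in> A" "k \<notin> A'" | "k \<in> A'" "k \<notin> A" | "(k \<in> A) = (k \<in> A')" by blast
  then show ?thesis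
  proof cases
    case 1
    then have "AE x in QQ P0 P1 A k. \<forall>\<delta>>0. eventually (\<lambda>n. cf A A' k * llr k n x \<le> (rate A A' k + \<delta>) * real n) sequentially"
    proof -
      have q: "QQ P0 P1 A k = P1 k" using 1 by (simp add: QQ_def)
      have c: "cf A A' k = 1" "rate A A' k = I k" using 1 by (auto simp: cf_def rate_def)
      show ?thesis unfolding q c using AE_I[OF k] by simp
    qed
    then show ?thesis by (rule PA_AE[OF k])
  next
    case 2
    then have "AE x in QQ P0 P1 A k. \<forall>\<delta>>0. eventually (\<lambda>n. cf A A' k * llr k n x \<le> (rate A A' k + \<delta>) * real n) sequentially"
    proof -
      have q: "QQ P0 P1 A k = P0 k" using 2 by (simp add: QQ_def)
      have c: "cf A A' k = -1" "rate A A' k = J k" using 2 by (auto simp: cf_def rate_def)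
      show ?thesis unfolding q c using AE_J[OF k] by simp
    qed
    then show ?thesis by (rule PA_AE[OF k])
  next
    case 3
    then have "cf A A' k = 0" "rate A A' k = 0" by (auto simp: cf_def rate_def)
    then show ?thesis by (auto intro!: always_eventually)
  qed
qed

lemma AE_Lam: "AE \<omega> in PA K P0 P1 A. \<forall>\<delta>>0. eventually (\<lambda>n. Lam A A' n \<omega> \<le> (Rt A A' + \<delta>) * real n) sequentially"
proof -
  have "AE \<omega> in PA K P0 P1 A. \<forall>k\<in>{1..K}. \<forall>\<delta>>0. eventually
     (\<lambda>n. cf A A' k * llr k n (\<omega> k) \<le> (rate A A' k + \<delta>) * real n) sequentially"
    by (intro AE_finite_allI AE_comp) auto
  then show ?thesis
  proof (rule eventually_mono, intro allI impI)
    fix \<omega>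
    assume h: "\<forall>k\<in>{1..K}. \<forall>\<delta>>0. eventually (\<lambda>n. cf A A' k * llr k n (\<omega> k) \<le> (rate A A' k + \<delta>) * real n) sequentially"
    fix \<delta> :: real assume d: "\<delta> > 0"
    define d' where "d' = \<delta> / (real K + 1)"
    have d': "d' > 0" "real K * d' \<le> \<delta>" using d by (auto simp: d'_def field_simps)
    have "eventually (\<lambda>n. \<forall>k\<in>{1..K}. cf A A' k * llr k n (\<omega> k) \<le> (rate A A' k + d') * real n) sequentially"
      using h d' by (intro eventually_ball_finite) auto
    then show "eventually (\<lambda>n. Lam A A' n \<omega> \<le> (Rt A A' + \<delta>) * real n) sequentially"
    proof (rule eventually_mono)
      fix n assume hn: "\<forall>k\<in>{1..K}. cf A A' k * llr k n (\<omega> k) \<le> (rate A A' k + d') * real n"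
      have "Lam A A' n \<omega> \<le> (\<Sum>k\<in>{1..K}. (rate A A' k + d') * real n)"
        unfolding Lam_def using hn by (intro sum_mono) auto
      also have "\<dots> = Rt A A' * real n + real K * d' * real n"
        by (simp add: Rt_def sum.distrib sum_distrib_right[symmetric] distrib_right)
      also have "\<dots> \<le> Rt A A' * real n + \<delta> * real n"
        using d' by (intro add_left_mono mult_right_mono) auto
      finally show "Lam A A' n \<omega> \<le> (Rt A A' + \<delta>) * real n" by (simp add: algebra_simps)
    qed
  qed
qed

lemma Lam_meas_PA: "1 \<le> n \<Longrightarrow> Lam A A' n \<in> borel_measurable (PA K P0 P1 B)"
  by (rule measurable_from_subalg[OF sub_PA Lam_meas])

lemma p_tendsto:
  assumes R: "Rt A A' > 0" and e: "\<epsilon> > 0"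
  shows "(\<lambda>N. measure (PA K P0 P1 A) {\<omega>\<in>space (joint_space K M). \<exists>n\<in>{1..N}. (1 + \<epsilon>) * Rt A A' * real N \<le> Lam A A' n \<omega>}) \<longlonglongrightarrow> 0"
proof (rule meas_tendsto0[OF PA_prob])
  fix N
  have "{\<omega>\<in>space (joint_space K M). \<exists>n\<in>{1..N}. (1 + \<epsilon>) * Rt A A' * real N \<le> Lam A A' n \<omega>}
     = (\<Union>n\<in>{1..N}. {\<omega>\<in>space (PA K P0 P1 A). (1 + \<epsilon>) * Rt A A' * real N \<le> Lam A A' n \<omega>})"
    by (auto simp: PA_space)
  also have "\<dots> \<in> sets (PA K P0 P1 A)"
    using Lam_meas_PA by (intro sets.finite_UN) auto
  finally show "{\<omega>\<in>space (joint_space K M). \<exists>n\<in>{1..N}. (1 + \<epsilon>) * Rt A A' * real N \<le> Lam A A' n \<omega>} \<in> sets (PA K P0 P1 A)" .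
  show "AE \<omega> in PA K P0 P1 A. eventually (\<lambda>N. \<omega> \<notin> {\<omega>\<in>space (joint_space K M). \<exists>n\<in>{1..N}. (1 + \<epsilon>) * Rt A A' * real N \<le> Lam A A' n \<omega>}) sequentially"
    using AE_Lam[of A A'] by (rule eventually_mono) (use maxbound_event[OF R e] in \<open>auto elim!: eventually_mono\<close>)
qed


lemma lower_proc:
  assumes proc: "is_procedure K M P0 P1 T D" and k: "k \<in> {1..K}"
  shows "ennreal (real N * (1 - measure (PA K P0 P1 A) {\<omega>\<in>space (joint_space K M). D k \<omega> \<noteq> v}
        - exp L * measure (PA K P0 P1 A') {\<omega>\<in>space (joint_space K M). D k \<omega> = v}
        - measure (PA K P0 P1 A) {\<omega>\<in>space (joint_space K M). \<exists>n\<in>{1..N}. L \<le> Lam A A' n \<omega>}))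
      \<le> ExpT K P0 P1 A (T k)"
proof -
  let ?Om = "space (joint_space K M)"
  let ?PA = "PA K P0 P1 A" and ?PA' = "PA K P0 P1 A'"
  interpret p: prob_space ?PA by (rule PA_prob)
  interpret p': prob_space ?PA' by (rule PA_prob)
  have T1: "\<And>\<omega>. \<omega> \<in> ?Om \<Longrightarrow> 1 \<le> T k \<omega>"
    and Tn: "\<And>n. {\<omega>\<in>?Om. T k \<omega> \<le> enat n} \<in> sets (joint_filt K M n)"
    and Dn: "\<And>n. {\<omega>\<in>?Om. D k \<omega> \<and> T k \<omega> \<le> enat n} \<in> sets (joint_filt K M n)"
    and Ds: "{\<omega>\<in>?Om. D k \<omega>} \<in> sets (joint_space K M)"
    using proc k unfolding is_procedure_def by blast+
  define S1 where "S1 = {\<omega>\<in>?Om. T k \<omega> \<le> enat N}"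
  define m1 where "m1 = measure ?PA {\<omega>\<in>?Om. D k \<omega> \<noteq> v}"
  define m2 where "m2 = measure ?PA' {\<omega>\<in>?Om. D k \<omega> = v}"
  define m3 where "m3 = measure ?PA {\<omega>\<in>?Om. \<exists>n\<in>{1..N}. L \<le> Lam A A' n \<omega>}"
  have S1s: "S1 \<in> sets ?PA" unfolding S1_def using Tn[of N] jf_sub[of K M N] by (auto simp: PA_sets)
  have "emeasure ?PA S1 \<le> ennreal m1 + ennreal (exp L) * ennreal m2 + ennreal m3"
    using lower_core[OF T1 Tn Dn Ds, of A N v L A'] unfolding S1_def m1_def m2_def m3_def
    by (simp add: p.emeasure_eq_measure p'.emeasure_eq_measure)
  also have "\<dots> = ennreal (m1 + exp L * m2 + m3)"
    by (simp add: ennreal_mult ennreal_plus m1_def m2_def m3_def)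
  finally have "ennreal (measure ?PA S1) \<le> ennreal (m1 + exp L * m2 + m3)"
    by (simp add: p.emeasure_eq_measure)
  then have le: "measure ?PA S1 \<le> m1 + exp L * m2 + m3"
    by (subst (asm) ennreal_le_iff) (auto simp: m1_def m2_def m3_def)
  have compl: "measure ?PA (?Om - S1) = 1 - measure ?PA S1"
    using p.prob_compl[OF S1s] by (simp add: PA_space)
  have "ennreal (real N * (1 - m1 - exp L * m2 - m3)) \<le> ennreal (real N * (1 - measure ?PA S1))"
    using le by (intro ennreal_leI mult_left_mono) auto
  also have "\<dots> = of_nat N * emeasure ?PA (?Om - S1)"
    using compl by (simp add: p.emeasure_eq_measure ennreal_mult ennreal_of_nat_eq_real_of_nat)
  also have "\<dots> = (\<integral>\<^sup>+\<omega>. of_nat N * indicator (?Om - S1) \<omega> \<partial>?PA)"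
    using S1s by (subst nn_integral_cmult_indicator) (auto simp flip: PA_space[of A])
  also have "\<dots> \<le> (\<integral>\<^sup>+\<omega>. ennreal_of_enat (T k \<omega>) \<partial>?PA)"
  proof (intro nn_integral_mono)
    fix \<omega>
    show "of_nat N * indicator (?Om - S1) \<omega> \<le> ennreal_of_enat (T k \<omega>)"
    proof (cases "\<omega> \<in> ?Om - S1")
      case True
      then have "enat N \<le> T k \<omega>" by (auto simp: S1_def)
      then have "ennreal_of_enat (enat N) \<le> ennreal_of_enat (T k \<omega>)" by (simp add: of_nat_eq_enat)
      then show ?thesis using True by simp
    qed simp
  qed
  finally show ?thesis unfolding ExpT_def m1_def m2_def m3_def .
qed

end

lemma asymp_equiv_by_eps:
  fixes f g :: "'a \<Rightarrow> real"
  assumes "\<And>c. c > 0 \<Longrightarrow> eventually (\<lambda>z. \<bar>f z - g z\<bar> \<le> c * \<bar>g z\<bar>) F"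
  shows "f \<sim>[F] g"
  unfolding asymp_equiv_altdef
  by (rule landau_o.smallI) (use assms in auto)

lemma ln_big:
  fixes x :: "'a \<Rightarrow> real"
  assumes x0: "(x \<longlongrightarrow> 0) F" and xpos: "eventually (\<lambda>z. 0 < x z) F"
  shows "eventually (\<lambda>z. B \<le> \<bar>ln (x z)\<bar>) F"
proof -
  have "eventually (\<lambda>z. x z < exp (- \<bar>B\<bar>)) F" by (rule order_tendstoD(2)[OF x0]) simp
  with xpos show ?thesis
  proof eventually_elim
    case (elim z)
    then have "ln (x z) < - \<bar>B\<bar>" by (metis ln_exp ln_less_cancel_iff exp_gt_zero)
    then show ?case by linarith
  qed
qed

lemma nat_floor_at_top:
  fixes x :: "'a \<Rightarrow> real"
  assumes x0: "(x \<longlongrightarrow> 0) F" and xpos: "eventually (\<lambda>z. 0 < x z) F" and c: "c > 0"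
  shows "filterlim (\<lambda>z. nat \<lfloor>c * \<bar>ln (x z)\<bar>\<rfloor>) at_top F"
  unfolding filterlim_at_top
proof
  fix Z :: nat
  have "eventually (\<lambda>z. (real Z + 1) / c \<le> \<bar>ln (x z)\<bar>) F" by (rule ln_big[OF x0 xpos])
  then show "eventually (\<lambda>z. Z \<le> nat \<lfloor>c * \<bar>ln (x z)\<bar>\<rfloor>) F"
  proof (rule eventually_mono)
    fix z assume "(real Z + 1) / c \<le> \<bar>ln (x z)\<bar>"
    then have "real Z + 1 \<le> c * \<bar>ln (x z)\<bar>" using c by (simp add: field_simps)
    then show "Z \<le> nat \<lfloor>c * \<bar>ln (x z)\<bar>\<rfloor>" by linarith
  qed
qed

lemma asym_upper:
  fixes x thr E :: "'a \<Rightarrow> real"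
  assumes R: "R > 0" and e: "0 < e" "e < 1"
    and x0: "(x \<longlongrightarrow> 0) F" and xpos: "eventually (\<lambda>z. 0 < x z) F"
    and thr: "thr \<sim>[F] (\<lambda>z. \<bar>ln (x z)\<bar>)"
    and upper: "\<And>\<epsilon>. 0 < \<epsilon> \<Longrightarrow> \<epsilon> < R \<Longrightarrow> \<exists>C. eventually (\<lambda>z. E z \<le> thr z / (R - \<epsilon>) + C) F"
  shows "eventually (\<lambda>z. E z \<le> (1 + e) * (\<bar>ln (x z)\<bar> / R)) F"
proof -
  define \<epsilon> where "\<epsilon> = e * R / (4 + e)"
  have eps: "0 < \<epsilon>" "\<epsilon> < R" using R e by (auto simp: \<epsilon>_def field_simps)
  have Reps: "R - \<epsilon> = 4 * R / (4 + e)" using e by (simp add: \<epsilon>_def field_simps)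
  obtain C where C: "eventually (\<lambda>z. E z \<le> thr z / (R - \<epsilon>) + C) F" using upper[OF eps] by blast
  have t: "eventually (\<lambda>z. norm (thr z) \<le> (1 + e/4) * norm \<bar>ln (x z)\<bar>) F"
    by (rule asymp_equiv_imp_eventually_le[OF thr]) (use e in simp)
  have big: "eventually (\<lambda>z. 4 * C * R / e \<le> \<bar>ln (x z)\<bar>) F" by (rule ln_big[OF x0 xpos])
  from C t big show ?thesis
  proof eventually_elim
    case (elim z)
    define g where "g = \<bar>ln (x z)\<bar> / R"
    have g0: "g \<ge> 0" using R by (simp add: g_def)
    have "thr z \<le> (1 + e/4) * \<bar>ln (x z)\<bar>" using elim(2) by simp
    then have "thr z / (R - \<epsilon>) \<le> (1 + e/4) * \<bar>ln (x z)\<bar> / (R - \<epsilon>)"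
      using eps by (intro divide_right_mono) auto
    also have "\<dots> = (1 + e/4) * (1 + e/4) * g"
      unfolding Reps g_def using R e by (simp add: field_simps)
    also have "\<dots> \<le> (1 + 3 * e / 4) * g"
      using e g0 by (intro mult_right_mono) (auto simp: algebra_simps power2_eq_square)
    finally have 1: "thr z / (R - \<epsilon>) \<le> (1 + 3 * e / 4) * g" .
    have 2: "C \<le> e / 4 * g" using elim(3) R e by (simp add: g_def field_simps)
    have "E z \<le> (1 + 3 * e / 4) * g + e / 4 * g" using elim(1) 1 2 by linarith
    then show ?case by (simp add: g_def algebra_simps add_divide_distrib)
  qed
qed

lemma asym_lower:
  fixes x y Lo :: "'a \<Rightarrow> real"
  assumes R: "R > 0" and e: "0 < e" "e < 1"
    and x0: "(x \<longlongrightarrow> 0) F" and xpos: "eventually (\<lambda>z. 0 < x z) F" and y0: "(y \<longlongrightarrow> 0) F"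
    and lower: "\<And>\<epsilon>. 0 < \<epsilon> \<Longrightarrow> \<epsilon> < 1 \<Longrightarrow> \<exists>p. p \<longlonglongrightarrow> 0 \<and> eventually (\<lambda>z.
        real (nat \<lfloor>(1 - \<epsilon>) / ((1 + \<epsilon>) * R) * \<bar>ln (x z)\<bar>\<rfloor>) *
          (1 - y z - x z powr \<epsilon> - p (nat \<lfloor>(1 - \<epsilon>) / ((1 + \<epsilon>) * R) * \<bar>ln (x z)\<bar>\<rfloor>)) \<le> Lo z) F"
  shows "eventually (\<lambda>z. (1 - e) * (\<bar>ln (x z)\<bar> / R) \<le> Lo z) F"
proof -
  define \<epsilon> where "\<epsilon> = e / 4"
  have eps: "0 < \<epsilon>" "\<epsilon> < 1" using e by (auto simp: \<epsilon>_def)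
  define c where "c = (1 - \<epsilon>) / ((1 + \<epsilon>) * R)"
  have c: "c > 0" using eps R by (simp add: c_def)
  obtain p where p: "p \<longlonglongrightarrow> 0" and ev: "eventually (\<lambda>z.
        real (nat \<lfloor>c * \<bar>ln (x z)\<bar>\<rfloor>) * (1 - y z - x z powr \<epsilon> - p (nat \<lfloor>c * \<bar>ln (x z)\<bar>\<rfloor>)) \<le> Lo z) F"
    using lower[OF eps] unfolding c_def by blast
  have Nf: "filterlim (\<lambda>z. nat \<lfloor>c * \<bar>ln (x z)\<bar>\<rfloor>) at_top F" by (rule nat_floor_at_top[OF x0 xpos c])
  have pN: "((\<lambda>z. p (nat \<lfloor>c * \<bar>ln (x z)\<bar>\<rfloor>)) \<longlongrightarrow> 0) F"
    by (rule filterlim_compose[OF p Nf])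
  have e8: "e / 8 > 0" using e by simp
  have ev1: "eventually (\<lambda>z. p (nat \<lfloor>c * \<bar>ln (x z)\<bar>\<rfloor>) < e / 8) F" by (rule order_tendstoD(2)[OF pN e8])
  have ev2: "eventually (\<lambda>z. y z < e / 8) F" by (rule order_tendstoD(2)[OF y0 e8])
  have ev3: "eventually (\<lambda>z. x z < (e / 8) powr (1 / \<epsilon>)) F" by (rule order_tendstoD(2)[OF x0]) (use e in simp)
  have ev4: "eventually (\<lambda>z. 8 * R / e \<le> \<bar>ln (x z)\<bar>) F" by (rule ln_big[OF x0 xpos])
  from ev ev1 ev2 ev3 ev4 xpos show ?thesis
  proof eventually_elim
    case (elim z)
    define g where "g = \<bar>ln (x z)\<bar> / R"
    define N where "N = nat \<lfloor>c * \<bar>ln (x z)\<bar>\<rfloor>"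
    have gbig: "g \<ge> 8 / e" using elim(5) R e by (simp add: g_def field_simps)
    have xp: "x z powr \<epsilon> < e / 8"
    proof -
      have "x z powr \<epsilon> < ((e / 8) powr (1 / \<epsilon>)) powr \<epsilon>"
        using elim(4) elim(6) eps by (intro powr_less_mono2) auto
      also have "\<dots> = e / 8" using eps e by (simp add: powr_powr)
      finally show ?thesis .
    qed
    have fac: "1 - y z - x z powr \<epsilon> - p N \<ge> 1 - 3 * e / 8"
      using elim(2,3) xp unfolding N_def by linarith
    have fac0: "1 - 3 * e / 8 > 0" using e by simp
    have N1: "real N \<ge> c * \<bar>ln (x z)\<bar> - 1" unfolding N_def by linarith
    have q: "c * \<bar>ln (x z)\<bar> = (1 - \<epsilon>) / (1 + \<epsilon>) * g" unfolding c_def g_def using R eps by (simp add: field_simps)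
    have q2: "(1 - \<epsilon>) / (1 + \<epsilon>) \<ge> 1 - e / 2" using eps e unfolding \<epsilon>_def by (simp add: field_simps)
    have g0: "g \<ge> 0" using R by (simp add: g_def)
    have N2: "real N \<ge> (1 - e / 2) * g - 1"
      using N1 q q2 g0 by (smt (verit, ccfv_SIG) mult_right_mono)
    have "Lo z \<ge> real N * (1 - y z - x z powr \<epsilon> - p N)" using elim(1) unfolding N_def by simp
    also have "real N * (1 - y z - x z powr \<epsilon> - p N) \<ge> real N * (1 - 3 * e / 8)"
      using fac by (intro mult_left_mono) auto
    also have "real N * (1 - 3 * e / 8) \<ge> ((1 - e / 2) * g - 1) * (1 - 3 * e / 8)"
      using N2 fac0 by (intro mult_right_mono) auto
    finally have L: "Lo z \<ge> ((1 - e / 2) * g - 1) * (1 - 3 * e / 8)" .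
    have "((1 - e / 2) * g - 1) * (1 - 3 * e / 8) = (1 - e/2) * (1 - 3*e/8) * g - (1 - 3 * e / 8)"
    proof -
      have "\<And>a b::real. (a * g - 1) * b = a * b * g - b" by (simp add: algebra_simps)
      then show ?thesis .
    qed
    also have "\<dots> \<ge> (1 - 7 * e / 8) * g - 1"
    proof -
      have "(1 - e/2) * (1 - 3*e/8) \<ge> 1 - 7 * e / 8" using e by (simp add: algebra_simps)
      then have "(1 - e/2) * (1 - 3*e/8) * g \<ge> (1 - 7 * e / 8) * g" using g0 by (intro mult_right_mono) auto
      then show ?thesis using e by simp
    qed
    also have "(1 - 7 * e / 8) * g - 1 \<ge> (1 - e) * g"
    proof -
      have "e * g \<ge> 8" using gbig e by (simp add: field_simps)
      then show ?thesis by (simp add: algebra_simps)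
    qed
    finally show ?case using L unfolding g_def by simp
  qed
qed

lemma asym_main:
  fixes x y thr E Lo :: "'a \<Rightarrow> real"
  assumes R: "R > 0"
    and x0: "(x \<longlongrightarrow> 0) F" and xpos: "eventually (\<lambda>z. 0 < x z) F" and y0: "(y \<longlongrightarrow> 0) F"
    and thr: "thr \<sim>[F] (\<lambda>z. \<bar>ln (x z)\<bar>)"
    and upper: "\<And>\<epsilon>. 0 < \<epsilon> \<Longrightarrow> \<epsilon> < R \<Longrightarrow> \<exists>C. eventually (\<lambda>z. E z \<le> thr z / (R - \<epsilon>) + C) F"
    and lower: "\<And>\<epsilon>. 0 < \<epsilon> \<Longrightarrow> \<epsilon> < 1 \<Longrightarrow> \<exists>p. p \<longlonglongrightarrow> 0 \<and> eventually (\<lambda>z.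
        real (nat \<lfloor>(1 - \<epsilon>) / ((1 + \<epsilon>) * R) * \<bar>ln (x z)\<bar>\<rfloor>) *
          (1 - y z - x z powr \<epsilon> - p (nat \<lfloor>(1 - \<epsilon>) / ((1 + \<epsilon>) * R) * \<bar>ln (x z)\<bar>\<rfloor>)) \<le> Lo z) F"
    and LoE: "eventually (\<lambda>z. Lo z \<le> E z) F"
  shows "E \<sim>[F] (\<lambda>z. \<bar>ln (x z)\<bar> / R)" "Lo \<sim>[F] (\<lambda>z. \<bar>ln (x z)\<bar> / R)"
proof -
  have both: "eventually (\<lambda>z. \<bar>E z - \<bar>ln (x z)\<bar> / R\<bar> \<le> c * \<bar>\<bar>ln (x z)\<bar> / R\<bar> \<and>
      \<bar>Lo z - \<bar>ln (x z)\<bar> / R\<bar> \<le> c * \<bar>\<bar>ln (x z)\<bar> / R\<bar>) F" if c: "c > 0" for c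
  proof -
    define e where "e = min c (1/2)"
    have e: "0 < e" "e < 1" "e \<le> c" using c by (auto simp: e_def)
    have u: "eventually (\<lambda>z. E z \<le> (1 + e) * (\<bar>ln (x z)\<bar> / R)) F"
      by (rule asym_upper[OF R e(1,2) x0 xpos thr upper])
    have l: "eventually (\<lambda>z. (1 - e) * (\<bar>ln (x z)\<bar> / R) \<le> Lo z) F"
      by (rule asym_lower[OF R e(1,2) x0 xpos y0 lower])
    from u l LoE show ?thesis
    proof eventually_elim
      case (elim z)
      define g where "g = \<bar>ln (x z)\<bar> / R"
      have g0: "g \<ge> 0" using R by (simp add: g_def)
      have "e * g \<le> c * g" using e g0 by (intro mult_right_mono) auto
      then show ?case using elim g0 unfolding g_def[symmetric] by (auto simp: algebra_simps abs_le_iff)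
    qed
  qed
  show "E \<sim>[F] (\<lambda>z. \<bar>ln (x z)\<bar> / R)"
  proof (rule asymp_equiv_by_eps)
    fix c :: real assume "c > 0"
    from both[OF this] show "eventually (\<lambda>z. \<bar>E z - \<bar>ln (x z)\<bar> / R\<bar> \<le> c * \<bar>\<bar>ln (x z)\<bar> / R\<bar>) F"
      by (rule eventually_mono) (rule conjunct1)
  qed
  show "Lo \<sim>[F] (\<lambda>z. \<bar>ln (x z)\<bar> / R)"
  proof (rule asymp_equiv_by_eps)
    fix c :: real assume "c > 0"
    from both[OF this] show "eventually (\<lambda>z. \<bar>Lo z - \<bar>ln (x z)\<bar> / R\<bar> \<le> c * \<bar>\<bar>ln (x z)\<bar> / R\<bar>) F"
      by (rule eventually_mono) (rule conjunct2)
  qed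
qed

lemma first_time_fail:
  assumes "enat t < first_time P" "1 \<le> t"
  shows "\<not> P t"
proof
  assume P: "P t"
  then have "first_time P = enat (LEAST n. 1 \<le> n \<and> P n)" using assms(2) by (auto simp: first_time_def)
  also have "(LEAST n. 1 \<le> n \<and> P n) \<le> t" using P assms(2) by (intro Least_le) auto
  finally show False using assms(1) by simp
qed

lemma hatT_fail1:
  assumes "enat t < hatT K l u llr a b c d k \<omega>" "1 \<le> t"
  shows "\<not> (if l = u then llr k t (\<omega> k) \<ge> kth_largest K (\<lambda>j. llr j t (\<omega> j)) (l + 1) + c
     else llr k t (\<omega> k) \<ge> min a (kth_largest K (\<lambda>j. llr j t (\<omega> j)) (l + 1) + c))"
proof -
  have "enat t < hatT1 K l u llr a c k \<omega>" using assms(1) by (simp add: hatT_def)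
  then show ?thesis using first_time_fail[OF _ assms(2)] unfolding hatT1_def by blast
qed

lemma hatT_fail2:
  assumes "enat t < hatT K l u llr a b c d k \<omega>" "1 \<le> t"
  shows "\<not> (if l = u then llr k t (\<omega> k) \<le> kth_largest K (\<lambda>j. llr j t (\<omega> j)) u - d
     else llr k t (\<omega> k) \<le> max (- b) (kth_largest K (\<lambda>j. llr j t (\<omega> j)) u - d))"
proof -
  have "enat t < hatT2 K l u llr b d k \<omega>" using assms(1) by (simp add: hatT_def)
  then show ?thesis using first_time_fail[OF _ assms(2)] unfolding hatT2_def by blast
qed

locale full = setting K M P0 P1 llr I J for K M and P0 P1 :: "nat \<Rightarrow> (nat \<Rightarrow> 'x) measure" and llr I J +
  fixes l u :: nat
  assumes lu: "l \<le> u" "u \<le> K" "0 < u" "l < K"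
    and compI: "\<And>k \<epsilon>. k \<in> {1..K} \<Longrightarrow> 0 < \<epsilon> \<Longrightarrow>
                 summable (\<lambda>n. measure (P1 k)
                   {x \<in> space (P1 k). llr k (Suc n) x / real (Suc n) \<le> I k - \<epsilon>})"
    and compJ: "\<And>k \<epsilon>. k \<in> {1..K} \<Longrightarrow> 0 < \<epsilon> \<Longrightarrow>
                 summable (\<lambda>n. measure (P0 k)
                   {x \<in> space (P0 k). - llr k (Suc n) x / real (Suc n) \<le> J k - \<epsilon>})"
begin

definition Bset :: "nat set \<Rightarrow> real \<Rightarrow> nat \<Rightarrow> nat \<Rightarrow> (nat \<Rightarrow> nat \<Rightarrow> 'x) set" where
  "Bset A \<delta> k t = (if t = 0 then {} else if k \<in> A
     then {\<omega>\<in>space (joint_space K M). llr k t (\<omega> k) / real t \<le> I k - \<delta>}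
     else {\<omega>\<in>space (joint_space K M). - llr k t (\<omega> k) / real t \<le> J k - \<delta>})"

definition CC :: "nat set \<Rightarrow> real \<Rightarrow> real" where
  "CC A \<delta> = (\<Sum>k\<in>{1..K}. \<Sum>t. measure (PA K P0 P1 A) (Bset A \<delta> k t))"

lemma Bset_sets: "k \<in> {1..K} \<Longrightarrow> Bset A \<delta> k t \<in> sets (PA K P0 P1 A)"
proof -
  assume k: "k \<in> {1..K}"
  show ?thesis
  proof (cases "t = 0")
    case False
    then have t: "1 \<le> t" by simp
    have m: "(\<lambda>\<omega>. llr k t (\<omega> k)) \<in> borel_measurable (PA K P0 P1 A)"
      by (rule measurable_from_subalg[OF sub_PA llr_comp_meas[OF k t]])
    show ?thesis using False m unfolding Bset_def by (auto simp: PA_space[of A, symmetric])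
  qed (simp add: Bset_def)
qed

lemma Bset_marg:
  assumes k: "k \<in> {1..K}" and t: "1 \<le> t"
  shows "measure (PA K P0 P1 A) (Bset A \<delta> k t) = (if k \<in> A
     then measure (P1 k) {x \<in> space (P1 k). llr k t x / real t \<le> I k - \<delta>}
     else measure (P0 k) {x \<in> space (P0 k). - llr k t x / real t \<le> J k - \<delta>})"
proof -
  have lm[measurable]: "llr k t \<in> borel_measurable (strm_path_space M k)" by (rule llr_meas[OF k t])
  have om: "\<omega> k \<in> space (strm_path_space M k)" if "\<omega> \<in> space (joint_space K M)" for \<omega>
    using that k by (auto simp: js_space)
  show ?thesis
  proof (cases "k \<in> A")
    case True
    let ?S = "{x \<in> space (strm_path_space M k). llr k t x / real t \<le> I k - \<delta>}"
    have S: "?S \<in> sets (strm_path_space M k)" by measurable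
    have "Bset A \<delta> k t = {\<omega>\<in>space (PA K P0 P1 A). \<omega> k \<in> ?S}"
      using True t om by (auto simp: Bset_def PA_space)
    then have "measure (PA K P0 P1 A) (Bset A \<delta> k t) = measure (QQ P0 P1 A k) ?S"
      using PA_marg_measure[OF k S] by simp
    then show ?thesis using True by (simp add: QQ_def P1_space[OF k])
  next
    case False
    let ?S = "{x \<in> space (strm_path_space M k). - llr k t x / real t \<le> J k - \<delta>}"
    have S: "?S \<in> sets (strm_path_space M k)" by measurable
    have "Bset A \<delta> k t = {\<omega>\<in>space (PA K P0 P1 A). \<omega> k \<in> ?S}"
      using False t om by (auto simp: Bset_def PA_space)
    then have "measure (PA K P0 P1 A) (Bset A \<delta> k t) = measure (QQ P0 P1 A k) ?S"
      using PA_marg_measure[OF k S] by simp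
    then show ?thesis using False by (simp add: QQ_def P0_space[OF k])
  qed
qed

lemma Bset_summable:
  assumes k: "k \<in> {1..K}" and d: "\<delta> > 0"
  shows "summable (\<lambda>t. measure (PA K P0 P1 A) (Bset A \<delta> k t))"
proof -
  have "summable (\<lambda>n. measure (PA K P0 P1 A) (Bset A \<delta> k (Suc n)))"
    using Bset_marg[OF k] compI[OF k d] compJ[OF k d] by (cases "k \<in> A") auto
  then show ?thesis by (subst summable_Suc_iff[symmetric])
qed


definition Ri :: "nat set \<Rightarrow> nat \<Rightarrow> real" where
  "Ri A i = I i + (if card A = l then calJ K J A else 0)"

definition Rj :: "nat set \<Rightarrow> nat \<Rightarrow> real" where
  "Rj A j = J j + (if card A = u then calI I A else 0)"

lemma calJ_le: "j \<in> {1..K} - A \<Longrightarrow> calJ K J A \<le> J j"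
  unfolding calJ_def by (rule Min_le) auto

lemma calI_le: "A \<subseteq> {1..K} \<Longrightarrow> i \<in> A \<Longrightarrow> calI I A \<le> I i"
  unfolding calI_def by (rule Min_le) (auto intro: finite_subset)

lemma hat_meas:
  assumes "is_procedure K M P0 P1 T D" "k \<in> {1..K}"
  shows "T k \<in> measurable (PA K P0 P1 A) (count_space UNIV)"
proof (rule enat_meas)
  fix n
  have "{\<omega>\<in>space (joint_space K M). T k \<omega> \<le> enat n} \<in> sets (joint_filt K M n)"
    using assms unfolding is_procedure_def by blast
  then show "{\<omega> \<in> space (PA K P0 P1 A). T k \<omega> \<le> enat n} \<in> sets (PA K P0 P1 A)"
    using jf_sub[of K M n] by (auto simp: PA_space PA_sets)
qed

lemma notB:
  assumes "\<omega> \<in> space (joint_space K M)" "\<omega> \<notin> Bset A \<delta> k t" "1 \<le> t"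
  shows "k \<in> A \<Longrightarrow> llr k t (\<omega> k) > (I k - \<delta>) * real t"
    and "k \<notin> A \<Longrightarrow> - llr k t (\<omega> k) > (J k - \<delta>) * real t"
proof -
  have tp: "real t > 0" using assms(3) by simp
  show "k \<in> A \<Longrightarrow> llr k t (\<omega> k) > (I k - \<delta>) * real t"
    using assms tp by (auto simp: Bset_def not_le pos_less_divide_eq)
  show "k \<notin> A \<Longrightarrow> - llr k t (\<omega> k) > (J k - \<delta>) * real t"
  proof -
    assume k: "k \<notin> A"
    then have "J k - \<delta> < (- llr k t (\<omega> k)) / real t" using assms by (auto simp: Bset_def not_le)
    then have "(J k - \<delta>) * real t < ((- llr k t (\<omega> k)) / real t) * real t"
      using tp by (intro mult_strict_right_mono) auto
    also have "\<dots> = - llr k t (\<omega> k)" using tp by simp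
    finally show ?thesis .
  qed
qed

lemma upper_i:
  assumes A: "A \<subseteq> {1..K}" "l \<le> card A" "card A \<le> u" and i: "i \<in> A"
    and e: "0 < \<epsilon>" "\<epsilon> < Ri A i"
    and ac: "0 \<le> a" "0 \<le> c"
    and proc: "is_procedure K M P0 P1 (hatT K l u llr a b c d) D"
  shows "ExpT K P0 P1 A (hatT K l u llr a b c d i)
     \<le> ennreal ((if card A = l then c else a) / (Ri A i - \<epsilon>) + 2 + CC A (\<epsilon> / 2))"
proof -
  define thr where "thr = (if card A = l then c else a)"
  define R where "R = Ri A i"
  have thr0: "thr \<ge> 0" using ac by (simp add: thr_def)
  have Re: "R - \<epsilon> > 0" using e by (simp add: R_def)
  define N0 where "N0 = nat \<lceil>thr / (R - \<epsilon>)\<rceil> + 1"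
  have iK: "i \<in> {1..K}" using A i by auto
  have e2: "\<epsilon> / 2 > 0" using e by simp
  have cover: "{\<omega>\<in>space (PA K P0 P1 A). enat t < hatT K l u llr a b c d i \<omega>} \<subseteq> (\<Union>k\<in>{1..K}. Bset A (\<epsilon>/2) k t)"
    if t: "t \<ge> N0" for t
  proof
    fix \<omega> assume "\<omega> \<in> {\<omega>\<in>space (PA K P0 P1 A). enat t < hatT K l u llr a b c d i \<omega>}"
    then have om: "\<omega> \<in> space (joint_space K M)" and lt: "enat t < hatT K l u llr a b c d i \<omega>"
      by (auto simp: PA_space)
    have t1: "1 \<le> t" using t by (simp add: N0_def)
    have tpos: "real t > 0" using t1 by simp
    have "thr / (R - \<epsilon>) \<le> real t" using t unfolding N0_def by linarith
    then have thrle: "thr \<le> (R - \<epsilon>) * real t" using Re by (simp add: pos_divide_le_eq mult.commute)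
    let ?x = "\<lambda>j. llr j t (\<omega> j)"
    note fail = hatT_fail1[OF lt t1]
    show "\<omega> \<in> (\<Union>k\<in>{1..K}. Bset A (\<epsilon>/2) k t)"
    proof (rule ccontr)
      assume nB: "\<omega> \<notin> (\<Union>k\<in>{1..K}. Bset A (\<epsilon>/2) k t)"
      have hi: "llr i t (\<omega> i) > (I i - \<epsilon>/2) * real t" using notB(1)[OF om _ t1 i] nB iK by blast
      show False
      proof (cases "card A = l")
        case True
        have lt1: "llr i t (\<omega> i) < kth_largest K ?x (l + 1) + c"
          using fail by (auto split: if_splits)
        obtain j where j: "j \<in> {1..K} - A" "kth_largest K ?x (l + 1) \<le> ?x j"
          using kth_above_outside[OF A(1) True lu(4)] by blast
        have hj: "- llr j t (\<omega> j) > (J j - \<epsilon>/2) * real t" using notB(2)[OF om _ t1] nB j(1) by blast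
        have "R \<le> I i + J j" using calJ_le[OF j(1)] True by (simp add: R_def Ri_def)
        then have "(R - \<epsilon>) * real t \<le> (I i - \<epsilon>/2) * real t + (J j - \<epsilon>/2) * real t"
        proof -
          have "R * real t \<le> (I i + J j) * real t" using tpos \<open>R \<le> I i + J j\<close> by (intro mult_right_mono) auto
          then show ?thesis by (simp add: algebra_simps)
        qed
        then have "c < llr i t (\<omega> i) - llr j t (\<omega> j)" using hi hj thrle True by (simp add: thr_def)
        then show False using lt1 j(2) by simp
      next
        case False
        then have "l \<noteq> u" using A by auto
        then have "llr i t (\<omega> i) < a" using fail by auto
        also have "a \<le> (I i - \<epsilon>) * real t" using thrle False by (simp add: thr_def R_def Ri_def)
        also have "\<dots> \<le> (I i - \<epsilon>/2) * real t" using tpos e by (intro mult_right_mono) auto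
        finally show False using hi by simp
      qed
    qed
  qed
  have "ExpT K P0 P1 A (hatT K l u llr a b c d i) \<le> ennreal (real N0 + (\<Sum>k\<in>{1..K}. \<Sum>t. measure (PA K P0 P1 A) (Bset A (\<epsilon>/2) k t)))"
    unfolding ExpT_def
    by (rule UB[OF PA_prob hat_meas[OF proc iK] finite_atLeastAtMost Bset_sets Bset_summable[OF _ e2] cover]) auto
  also have "\<dots> \<le> ennreal (thr / (R - \<epsilon>) + 2 + CC A (\<epsilon> / 2))"
  proof (rule ennreal_leI)
    have "real N0 \<le> thr / (R - \<epsilon>) + 2" unfolding N0_def using thr0 Re by (simp add: of_nat_nat) linarith
    then show "real N0 + (\<Sum>k\<in>{1..K}. \<Sum>t. measure (PA K P0 P1 A) (Bset A (\<epsilon>/2) k t)) \<le> thr / (R - \<epsilon>) + 2 + CC A (\<epsilon> / 2)"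
      by (simp add: CC_def)
  qed
  finally show ?thesis by (simp add: thr_def R_def)
qed


lemma upper_j:
  assumes A: "A \<subseteq> {1..K}" "l \<le> card A" "card A \<le> u" and j: "j \<in> {1..K} - A"
    and e: "0 < \<epsilon>" "\<epsilon> < Rj A j"
    and bd: "0 \<le> b" "0 \<le> d"
    and proc: "is_procedure K M P0 P1 (hatT K l u llr a b c d) D"
  shows "ExpT K P0 P1 A (hatT K l u llr a b c d j)
     \<le> ennreal ((if card A = u then d else b) / (Rj A j - \<epsilon>) + 2 + CC A (\<epsilon> / 2))"
proof -
  define thr where "thr = (if card A = u then d else b)"
  define R where "R = Rj A j"
  have thr0: "thr \<ge> 0" using bd by (simp add: thr_def)
  have Re: "R - \<epsilon> > 0" using e by (simp add: R_def)
  define N0 where "N0 = nat \<lceil>thr / (R - \<epsilon>)\<rceil> + 1"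
  have jK: "j \<in> {1..K}" "j \<notin> A" using j by auto
  have e2: "\<epsilon> / 2 > 0" using e by simp
  have cover: "{\<omega>\<in>space (PA K P0 P1 A). enat t < hatT K l u llr a b c d j \<omega>} \<subseteq> (\<Union>k\<in>{1..K}. Bset A (\<epsilon>/2) k t)"
    if t: "t \<ge> N0" for t
  proof
    fix \<omega> assume "\<omega> \<in> {\<omega>\<in>space (PA K P0 P1 A). enat t < hatT K l u llr a b c d j \<omega>}"
    then have om: "\<omega> \<in> space (joint_space K M)" and lt: "enat t < hatT K l u llr a b c d j \<omega>"
      by (auto simp: PA_space)
    have t1: "1 \<le> t" using t by (simp add: N0_def)
    have tpos: "real t > 0" using t1 by simp
    have "thr / (R - \<epsilon>) \<le> real t" using t unfolding N0_def by linarith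
    then have thrle: "thr \<le> (R - \<epsilon>) * real t" using Re by (simp add: pos_divide_le_eq mult.commute)
    let ?x = "\<lambda>j. llr j t (\<omega> j)"
    note fail = hatT_fail2[OF lt t1]
    show "\<omega> \<in> (\<Union>k\<in>{1..K}. Bset A (\<epsilon>/2) k t)"
    proof (rule ccontr)
      assume nB: "\<omega> \<notin> (\<Union>k\<in>{1..K}. Bset A (\<epsilon>/2) k t)"
      have hj: "- llr j t (\<omega> j) > (J j - \<epsilon>/2) * real t" using notB(2)[OF om _ t1 jK(2)] nB jK(1) by blast
      show False
      proof (cases "card A = u")
        case True
        have lt1: "llr j t (\<omega> j) > kth_largest K ?x u - d"
          using fail by (auto split: if_splits)
        obtain i where i: "i \<in> A" "?x i \<le> kth_largest K ?x u"
          using kth_below_inside[OF A(1) True _ lu(2), of ?x] lu(3) by auto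
        have iK: "i \<in> {1..K}" using i A by auto
        have hi: "llr i t (\<omega> i) > (I i - \<epsilon>/2) * real t" using notB(1)[OF om _ t1 i(1)] nB iK by blast
        have "R \<le> J j + I i" using calI_le[OF A(1) i(1)] True by (simp add: R_def Rj_def)
        then have "(R - \<epsilon>) * real t \<le> (I i - \<epsilon>/2) * real t + (J j - \<epsilon>/2) * real t"
        proof -
          have "R * real t \<le> (J j + I i) * real t" using tpos \<open>R \<le> J j + I i\<close> by (intro mult_right_mono) auto
          then show ?thesis by (simp add: algebra_simps)
        qed
        then have "d < llr i t (\<omega> i) - llr j t (\<omega> j)" using hi hj thrle True by (simp add: thr_def)
        then show False using lt1 i(2) by simp
      next
        case False
        then have "l \<noteq> u" using A by auto
        then have "llr j t (\<omega> j) > - b" using fail by auto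
        then have "- llr j t (\<omega> j) < b" by simp
        also have "b \<le> (J j - \<epsilon>) * real t" using thrle False by (simp add: thr_def R_def Rj_def)
        also have "\<dots> \<le> (J j - \<epsilon>/2) * real t" using tpos e by (intro mult_right_mono) auto
        finally show False using hj by simp
      qed
    qed
  qed
  have "ExpT K P0 P1 A (hatT K l u llr a b c d j) \<le> ennreal (real N0 + (\<Sum>k\<in>{1..K}. \<Sum>t. measure (PA K P0 P1 A) (Bset A (\<epsilon>/2) k t)))"
    unfolding ExpT_def
    by (rule UB[OF PA_prob hat_meas[OF proc jK(1)] finite_atLeastAtMost Bset_sets Bset_summable[OF _ e2] cover]) auto
  also have "\<dots> \<le> ennreal (thr / (R - \<epsilon>) + 2 + CC A (\<epsilon> / 2))"
  proof (rule ennreal_leI)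
    have "real N0 \<le> thr / (R - \<epsilon>) + 2" unfolding N0_def using thr0 Re by (simp add: of_nat_nat) linarith
    then show "real N0 + (\<Sum>k\<in>{1..K}. \<Sum>t. measure (PA K P0 P1 A) (Bset A (\<epsilon>/2) k t)) \<le> thr / (R - \<epsilon>) + 2 + CC A (\<epsilon> / 2)"
      by (simp add: CC_def)
  qed
  finally show ?thesis by (simp add: thr_def R_def)
qed

end

context full begin

definition j0 :: "nat set \<Rightarrow> nat" where
  "j0 A = (SOME j. j \<in> {1..K} - A \<and> J j = calJ K J A)"
definition i0 :: "nat set \<Rightarrow> nat" where
  "i0 A = (SOME i. i \<in> A \<and> I i = calI I A)"
definition Ai :: "nat set \<Rightarrow> nat \<Rightarrow> nat set" where
  "Ai A i = (if card A = l then insert (j0 A) (A - {i}) else A - {i})"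
definition Aj :: "nat set \<Rightarrow> nat \<Rightarrow> nat set" where
  "Aj A j = (if card A = u then insert j (A - {i0 A}) else insert j A)"

lemma j0_prop:
  assumes "A \<subseteq> {1..K}" "card A < K"
  shows "j0 A \<in> {1..K} - A \<and> J (j0 A) = calJ K J A"
proof -
  have ne: "{1..K} - A \<noteq> {}"
  proof
    assume "{1..K} - A = {}"
    then have "{1..K} \<subseteq> A" by auto
    then have "card {1..K} \<le> card A" using assms by (intro card_mono) (auto intro: finite_subset)
    then show False using assms by simp
  qed
  have "calJ K J A \<in> J ` ({1..K} - A)" unfolding calJ_def using ne by (intro Min_in) auto
  then have "\<exists>j. j \<in> {1..K} - A \<and> J j = calJ K J A" by auto
  then show ?thesis unfolding j0_def by (rule someI_ex)
qed

lemma i0_prop: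
  assumes "A \<subseteq> {1..K}" "A \<noteq> {}"
  shows "i0 A \<in> A \<and> I (i0 A) = calI I A"
proof -
  have "calI I A \<in> I ` A" unfolding calI_def using assms by (intro Min_in) (auto intro: finite_subset)
  then have "\<exists>i. i \<in> A \<and> I i = calI I A" by auto
  then show ?thesis unfolding i0_def by (rule someI_ex)
qed

lemma rate_two:
  assumes "\<And>k. k \<in> {1..K} \<Longrightarrow> rate A A' k = (if k = p then x else 0) + (if k = q then y else 0)"
    and "p \<in> {1..K}" "q \<in> {1..K}"
  shows "Rt A A' = x + y"
proof -
  have "Rt A A' = (\<Sum>k\<in>{1..K}. (if k = p then x else 0) + (if k = q then y else 0))"
    unfolding Rt_def by (rule sum.cong) (auto simp: assms(1))
  also have "\<dots> = x + y" using assms(2,3) by (simp add: sum.distrib)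
  finally show ?thesis .
qed

lemma Ai_props:
  assumes A: "A \<in> Pi_lu K l u" and i: "i \<in> A"
  shows "Ai A i \<in> Pi_lu K l u" "i \<notin> Ai A i" "Rt A (Ai A i) = Ri A i" "Ri A i > 0"
proof -
  have AK: "A \<subseteq> {1..K}" "l \<le> card A" "card A \<le> u" using A by (auto simp: Pi_lu_def)
  have fA: "finite A" using AK(1) by (rule finite_subset) simp
  have iK: "i \<in> {1..K}" using i AK by auto
  have cA: "card A \<ge> 1" using i fA by (metis One_nat_def Suc_leI card_gt_0_iff empty_iff)
  show "Ai A i \<in> Pi_lu K l u" "i \<notin> Ai A i" "Rt A (Ai A i) = Ri A i"
  proof (atomize (full), cases "card A = l")
    case True
    have cl: "card A < K" using True lu by simp
    note j = j0_prop[OF AK(1) cl]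
    have ij: "i \<noteq> j0 A" using j i by auto
    have c1: "card (insert (j0 A) (A - {i})) = card A"
      using j i fA cA by (simp add: card_insert_if)
    have "insert (j0 A) (A - {i}) \<in> Pi_lu K l u" using c1 AK j by (auto simp: Pi_lu_def)
    moreover have "i \<notin> insert (j0 A) (A - {i})" using ij by simp
    moreover have "Rt A (insert (j0 A) (A - {i})) = I i + J (j0 A)"
      by (rule rate_two[where p=i and q="j0 A"]) (use j i ij iK in \<open>auto simp: rate_def\<close>)
    ultimately show "Ai A i \<in> Pi_lu K l u \<and> i \<notin> Ai A i \<and> Rt A (Ai A i) = Ri A i"
      using True j by (simp add: Ai_def Ri_def)
  next
    case False
    have c1: "card (A - {i}) = card A - 1" using i fA by simp
    have "A - {i} \<in> Pi_lu K l u" using c1 AK False by (auto simp: Pi_lu_def)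
    moreover have "Rt A (A - {i}) = I i + 0"
      by (rule rate_two[where p=i and q=i]) (use i iK in \<open>auto simp: rate_def\<close>)
    ultimately show "Ai A i \<in> Pi_lu K l u \<and> i \<notin> Ai A i \<and> Rt A (Ai A i) = Ri A i"
      using False by (simp add: Ai_def Ri_def)
  qed
  show "Ri A i > 0"
  proof (cases "card A = l")
    case True
    have cl: "card A < K" using True lu by simp
    note j = j0_prop[OF AK(1) cl]
    then have "calJ K J A > 0" using IJpos[of "j0 A"] by auto
    then show ?thesis using IJpos[OF iK] True by (simp add: Ri_def)
  qed (use IJpos[OF iK] in \<open>simp add: Ri_def\<close>)
qed

lemma Aj_props:
  assumes A: "A \<in> Pi_lu K l u" and j: "j \<in> {1..K} - A"
  shows "Aj A j \<in> Pi_lu K l u" "j \<in> Aj A j" "Rt A (Aj A j) = Rj A j" "Rj A j > 0"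
proof -
  have AK: "A \<subseteq> {1..K}" "l \<le> card A" "card A \<le> u" using A by (auto simp: Pi_lu_def)
  have fA: "finite A" using AK(1) by (rule finite_subset) simp
  have jK: "j \<in> {1..K}" "j \<notin> A" using j by auto
  show "Aj A j \<in> Pi_lu K l u" "j \<in> Aj A j" "Rt A (Aj A j) = Rj A j"
  proof (atomize (full), cases "card A = u")
    case True
    have ne: "A \<noteq> {}" using True lu by auto
    note i = i0_prop[OF AK(1) ne]
    have ij: "i0 A \<noteq> j" using i jK by auto
    have c1: "card (insert j (A - {i0 A})) = card A"
      using i jK fA ne by (simp add: card_insert_if) (metis One_nat_def Suc_pred card_gt_0_iff)
    have "insert j (A - {i0 A}) \<in> Pi_lu K l u" using c1 AK jK by (auto simp: Pi_lu_def)
    moreover have "Rt A (insert j (A - {i0 A})) = J j + I (i0 A)"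
      by (rule rate_two[where p=j and q="i0 A"]) (use i jK ij AK in \<open>auto simp: rate_def\<close>)
    ultimately show "Aj A j \<in> Pi_lu K l u \<and> j \<in> Aj A j \<and> Rt A (Aj A j) = Rj A j"
      using True i by (simp add: Aj_def Rj_def)
  next
    case False
    have c1: "card (insert j A) = card A + 1" using jK fA by simp
    have "insert j A \<in> Pi_lu K l u" using c1 AK False jK by (auto simp: Pi_lu_def)
    moreover have "Rt A (insert j A) = J j + 0"
      by (rule rate_two[where p=j and q=j]) (use jK in \<open>auto simp: rate_def\<close>)
    ultimately show "Aj A j \<in> Pi_lu K l u \<and> j \<in> Aj A j \<and> Rt A (Aj A j) = Rj A j"
      using False by (simp add: Aj_def Rj_def)
  qed
  show "Rj A j > 0"
  proof (cases "card A = u")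
    case True
    have ne: "A \<noteq> {}" using True lu by auto
    note i = i0_prop[OF AK(1) ne]
    then have "calI I A > 0" using IJpos[of "i0 A"] AK by auto
    then show ?thesis using IJpos[OF jK(1)] True by (simp add: Rj_def)
  qed (use IJpos[OF jK(1)] in \<open>simp add: Rj_def\<close>)
qed


lemma FWE1_set:
  assumes "is_procedure K M P0 P1 T D"
  shows "{\<omega>\<in>space (PA K P0 P1 B). \<exists>j\<in>{1..K} - A. D j \<omega>} \<in> sets (PA K P0 P1 B)"
proof -
  have "{\<omega>\<in>space (PA K P0 P1 B). \<exists>j\<in>{1..K} - A. D j \<omega>} = (\<Union>j\<in>{1..K} - A. {\<omega>\<in>space (joint_space K M). D j \<omega>})"
    by (auto simp: PA_space)
  also have "\<dots> \<in> sets (PA K P0 P1 B)" using assms unfolding is_procedure_def PA_sets by auto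
  finally show ?thesis .
qed

lemma FWE2_set:
  assumes "is_procedure K M P0 P1 T D" "A \<subseteq> {1..K}"
  shows "{\<omega>\<in>space (PA K P0 P1 B). \<exists>i\<in>A. \<not> D i \<omega>} \<in> sets (PA K P0 P1 B)"
proof -
  have "{\<omega>\<in>space (PA K P0 P1 B). \<exists>i\<in>A. \<not> D i \<omega>} = (\<Union>i\<in>A. space (joint_space K M) - {\<omega>\<in>space (joint_space K M). D i \<omega>})"
    by (auto simp: PA_space)
  also have "\<dots> \<in> sets (PA K P0 P1 B)" using assms unfolding is_procedure_def PA_sets
    by (intro sets.finite_UN) (auto intro: finite_subset)
  finally show ?thesis .
qed

lemma expL_bound:
  assumes x: "0 < x" "x < 1" and e: "0 < \<epsilon>" "\<epsilon> < 1" and R: "R > 0"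
  shows "exp ((1 + \<epsilon>) * R * real (nat \<lfloor>(1 - \<epsilon>) / ((1 + \<epsilon>) * R) * \<bar>ln x\<bar>\<rfloor>)) * x \<le> x powr \<epsilon>"
proof -
  define N where "N = nat \<lfloor>(1 - \<epsilon>) / ((1 + \<epsilon>) * R) * \<bar>ln x\<bar>\<rfloor>"
  have nn: "(1 - \<epsilon>) / ((1 + \<epsilon>) * R) * \<bar>ln x\<bar> \<ge> 0" using e R by simp
  have "real N \<le> (1 - \<epsilon>) / ((1 + \<epsilon>) * R) * \<bar>ln x\<bar>" unfolding N_def using nn by linarith
  then have "(1 + \<epsilon>) * R * real N \<le> (1 + \<epsilon>) * R * ((1 - \<epsilon>) / ((1 + \<epsilon>) * R) * \<bar>ln x\<bar>)"
    using e R by (intro mult_left_mono) auto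
  also have "\<dots> = (1 - \<epsilon>) * \<bar>ln x\<bar>"
  proof -
    have gen: "c \<noteq> 0 \<Longrightarrow> c * (a / c * y) = a * (y::real)" for a c y by (simp add: field_simps)
    show ?thesis by (rule gen) (use e R in simp)
  qed
  finally have L: "(1 + \<epsilon>) * R * real N \<le> (1 - \<epsilon>) * \<bar>ln x\<bar>" .
  have lnx: "\<bar>ln x\<bar> = - ln x" using x by simp
  have "exp ((1 + \<epsilon>) * R * real N) * x \<le> exp ((1 - \<epsilon>) * \<bar>ln x\<bar>) * x"
    using L x by (intro mult_right_mono) auto
  also have "\<dots> = exp ((1 - \<epsilon>) * \<bar>ln x\<bar> + ln x)" by (simp only: exp_add exp_ln[OF x(1)])
  also have "(1 - \<epsilon>) * \<bar>ln x\<bar> + ln x = \<epsilon> * ln x" unfolding lnx by (simp add: algebra_simps)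
  also have "exp (\<epsilon> * ln x) = x powr \<epsilon>" using x by (simp add: powr_def mult.commute)
  finally show ?thesis unfolding N_def .
qed

lemma lower_i:
  assumes A: "A \<in> Pi_lu K l u" and i: "i \<in> A"
    and Dl: "in_Delta K M P0 P1 \<alpha> \<beta> (Pi_lu K l u) T D"
    and al: "0 < \<alpha>" "\<alpha> < 1" and e: "0 < \<epsilon>" "\<epsilon> < 1"
  shows "ennreal (real (nat \<lfloor>(1 - \<epsilon>) / ((1 + \<epsilon>) * Ri A i) * \<bar>ln \<alpha>\<bar>\<rfloor>) *
     (1 - \<beta> - \<alpha> powr \<epsilon> - measure (PA K P0 P1 A) {\<omega>\<in>space (joint_space K M).
        \<exists>n\<in>{1..nat \<lfloor>(1 - \<epsilon>) / ((1 + \<epsilon>) * Ri A i) * \<bar>ln \<alpha>\<bar>\<rfloor>}.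
          (1 + \<epsilon>) * Rt A (Ai A i) * real (nat \<lfloor>(1 - \<epsilon>) / ((1 + \<epsilon>) * Ri A i) * \<bar>ln \<alpha>\<bar>\<rfloor>) \<le> Lam A (Ai A i) n \<omega>}))
    \<le> ExpT K P0 P1 A (T i)"
proof -
  define R where "R = Ri A i"
  define N where "N = nat \<lfloor>(1 - \<epsilon>) / ((1 + \<epsilon>) * R) * \<bar>ln \<alpha>\<bar>\<rfloor>"
  define A' where "A' = Ai A i"
  define L where "L = (1 + \<epsilon>) * R * real N"
  note AP = Ai_props[OF A i]
  have R: "R > 0" using AP by (simp add: R_def)
  have RT: "Rt A A' = R" using AP by (simp add: R_def A'_def)
  have AK: "A \<subseteq> {1..K}" using A by (simp add: Pi_lu_def)
  have iK: "i \<in> {1..K}" using i AK by auto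
  have proc: "is_procedure K M P0 P1 T D" using Dl by (simp add: in_Delta_def)
  have err: "FWE1 K P0 P1 D B \<le> \<alpha> \<and> FWE2 K P0 P1 D B \<le> \<beta>" if "B \<in> Pi_lu K l u" for B
    using Dl that by (simp add: in_Delta_def)
  interpret p: prob_space "PA K P0 P1 A" by (rule PA_prob)
  interpret p': prob_space "PA K P0 P1 A'" by (rule PA_prob)
  define m1 where "m1 = measure (PA K P0 P1 A) {\<omega>\<in>space (joint_space K M). D i \<omega> \<noteq> True}"
  define m2 where "m2 = measure (PA K P0 P1 A') {\<omega>\<in>space (joint_space K M). D i \<omega> = True}"
  define m3 where "m3 = measure (PA K P0 P1 A) {\<omega>\<in>space (joint_space K M). \<exists>n\<in>{1..N}. L \<le> Lam A A' n \<omega>}"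
  have core: "ennreal (real N * (1 - m1 - exp L * m2 - m3)) \<le> ExpT K P0 P1 A (T i)"
    unfolding m1_def m2_def m3_def by (rule lower_proc[OF proc iK])
  have m1: "m1 \<le> \<beta>"
  proof -
    have "m1 \<le> measure (PA K P0 P1 A) {\<omega>\<in>space (PA K P0 P1 A). \<exists>i\<in>A. \<not> D i \<omega>}"
      unfolding m1_def using i by (intro p.finite_measure_mono FWE2_set[OF proc AK]) (auto simp: PA_space)
    also have "\<dots> \<le> \<beta>" using err[OF A] by (simp add: FWE2_def)
    finally show ?thesis .
  qed
  have m2: "m2 \<le> \<alpha>"
  proof -
    have "m2 \<le> measure (PA K P0 P1 A') {\<omega>\<in>space (PA K P0 P1 A'). \<exists>j\<in>{1..K} - A'. D j \<omega>}"
      unfolding m2_def using iK AP(2)[folded A'_def]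
      by (intro p'.finite_measure_mono FWE1_set[OF proc]) (auto simp: PA_space)
    also have "\<dots> \<le> \<alpha>" using err[OF AP(1)] by (simp add: FWE1_def A'_def)
    finally show ?thesis .
  qed
  have eL: "exp L * \<alpha> \<le> \<alpha> powr \<epsilon>"
    unfolding L_def N_def by (rule expL_bound[OF al e R])
  have em: "exp L * m2 \<le> exp L * \<alpha>" using m2 by (intro mult_left_mono) auto
  have "1 - \<beta> - \<alpha> powr \<epsilon> - m3 \<le> 1 - m1 - exp L * m2 - m3" using em m1 eL by linarith
  then have "real N * (1 - \<beta> - \<alpha> powr \<epsilon> - m3) \<le> real N * (1 - m1 - exp L * m2 - m3)"
    by (rule mult_left_mono) simp
  then have "ennreal (real N * (1 - \<beta> - \<alpha> powr \<epsilon> - m3)) \<le> ExpT K P0 P1 A (T i)"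
    using core by (meson ennreal_leI order_trans)
  then show ?thesis unfolding m3_def L_def N_def R_def A'_def using RT[unfolded R_def A'_def] by simp
qed

lemma lower_j:
  assumes A: "A \<in> Pi_lu K l u" and j: "j \<in> {1..K} - A"
    and Dl: "in_Delta K M P0 P1 \<alpha> \<beta> (Pi_lu K l u) T D"
    and be: "0 < \<beta>" "\<beta> < 1" and e: "0 < \<epsilon>" "\<epsilon> < 1"
  shows "ennreal (real (nat \<lfloor>(1 - \<epsilon>) / ((1 + \<epsilon>) * Rj A j) * \<bar>ln \<beta>\<bar>\<rfloor>) *
     (1 - \<alpha> - \<beta> powr \<epsilon> - measure (PA K P0 P1 A) {\<omega>\<in>space (joint_space K M).
        \<exists>n\<in>{1..nat \<lfloor>(1 - \<epsilon>) / ((1 + \<epsilon>) * Rj A j) * \<bar>ln \<beta>\<bar>\<rfloor>}.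
          (1 + \<epsilon>) * Rt A (Aj A j) * real (nat \<lfloor>(1 - \<epsilon>) / ((1 + \<epsilon>) * Rj A j) * \<bar>ln \<beta>\<bar>\<rfloor>) \<le> Lam A (Aj A j) n \<omega>}))
    \<le> ExpT K P0 P1 A (T j)"
proof -
  define R where "R = Rj A j"
  define N where "N = nat \<lfloor>(1 - \<epsilon>) / ((1 + \<epsilon>) * R) * \<bar>ln \<beta>\<bar>\<rfloor>"
  define A' where "A' = Aj A j"
  define L where "L = (1 + \<epsilon>) * R * real N"
  note AP = Aj_props[OF A j]
  have R: "R > 0" using AP by (simp add: R_def)
  have RT: "Rt A A' = R" using AP by (simp add: R_def A'_def)
  have AK: "A \<subseteq> {1..K}" using A by (simp add: Pi_lu_def)
  have A'K: "A' \<subseteq> {1..K}" using AP(1) by (simp add: Pi_lu_def A'_def)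
  have jK: "j \<in> {1..K}" "j \<notin> A" using j by auto
  have proc: "is_procedure K M P0 P1 T D" using Dl by (simp add: in_Delta_def)
  have err: "FWE1 K P0 P1 D B \<le> \<alpha> \<and> FWE2 K P0 P1 D B \<le> \<beta>" if "B \<in> Pi_lu K l u" for B
    using Dl that by (simp add: in_Delta_def)
  interpret p: prob_space "PA K P0 P1 A" by (rule PA_prob)
  interpret p': prob_space "PA K P0 P1 A'" by (rule PA_prob)
  define m1 where "m1 = measure (PA K P0 P1 A) {\<omega>\<in>space (joint_space K M). D j \<omega> \<noteq> False}"
  define m2 where "m2 = measure (PA K P0 P1 A') {\<omega>\<in>space (joint_space K M). D j \<omega> = False}"
  define m3 where "m3 = measure (PA K P0 P1 A) {\<omega>\<in>space (joint_space K M). \<exists>n\<in>{1..N}. L \<le> Lam A A' n \<omega>}"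
  have core: "ennreal (real N * (1 - m1 - exp L * m2 - m3)) \<le> ExpT K P0 P1 A (T j)"
    unfolding m1_def m2_def m3_def by (rule lower_proc[OF proc jK(1)])
  have m1: "m1 \<le> \<alpha>"
  proof -
    have "m1 \<le> measure (PA K P0 P1 A) {\<omega>\<in>space (PA K P0 P1 A). \<exists>j\<in>{1..K} - A. D j \<omega>}"
      unfolding m1_def using jK by (intro p.finite_measure_mono FWE1_set[OF proc]) (auto simp: PA_space)
    also have "\<dots> \<le> \<alpha>" using err[OF A] by (simp add: FWE1_def)
    finally show ?thesis .
  qed
  have m2: "m2 \<le> \<beta>"
  proof -
    have "m2 \<le> measure (PA K P0 P1 A') {\<omega>\<in>space (PA K P0 P1 A'). \<exists>i\<in>A'. \<not> D i \<omega>}"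
      unfolding m2_def using AP(2)[folded A'_def]
      by (intro p'.finite_measure_mono FWE2_set[OF proc A'K]) (auto simp: PA_space)
    also have "\<dots> \<le> \<beta>" using err[OF AP(1)] by (simp add: FWE2_def A'_def)
    finally show ?thesis .
  qed
  have eL: "exp L * \<beta> \<le> \<beta> powr \<epsilon>"
    unfolding L_def N_def by (rule expL_bound[OF be e R])
  have em: "exp L * m2 \<le> exp L * \<beta>" using m2 by (intro mult_left_mono) auto
  have "1 - \<alpha> - \<beta> powr \<epsilon> - m3 \<le> 1 - m1 - exp L * m2 - m3" using em m1 eL by linarith
  then have "real N * (1 - \<alpha> - \<beta> powr \<epsilon> - m3) \<le> real N * (1 - m1 - exp L * m2 - m3)"
    by (rule mult_left_mono) simp
  then have "ennreal (real N * (1 - \<alpha> - \<beta> powr \<epsilon> - m3)) \<le> ExpT K P0 P1 A (T j)"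
    using core by (meson ennreal_leI order_trans)
  then show ?thesis unfolding m3_def L_def N_def R_def A'_def using RT[unfolded R_def A'_def] by simp
qed

end

abbreviation FF :: "(real \<times> real) filter" where "FF \<equiv> at_right 0 \<times>\<^sub>F at_right 0"

lemma ev_fst: "eventually P (at_right (0::real)) \<Longrightarrow> eventually (\<lambda>z. P (fst z)) FF"
  unfolding eventually_prod_filter by (intro exI[of _ P] exI[of _ "\<lambda>_. True"]) auto

lemma ev_snd: "eventually P (at_right (0::real)) \<Longrightarrow> eventually (\<lambda>z. P (snd z)) FF"
  unfolding eventually_prod_filter by (intro exI[of _ "\<lambda>_. True"] exI[of _ P]) auto

lemma ev_unit: "eventually (\<lambda>x::real. 0 < x \<and> x < 1) (at_right 0)"
  using eventually_at_right_real[of 0 1] by simp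

lemma evF: "eventually (\<lambda>z. 0 < fst z \<and> fst z < 1 \<and> 0 < snd z \<and> snd z < 1) FF"
  using ev_fst[OF ev_unit] ev_snd[OF ev_unit] by eventually_elim auto

lemma fst0: "((\<lambda>z. fst z) \<longlongrightarrow> (0::real)) FF"
proof (rule order_tendstoI)
  fix a :: real assume "a < 0"
  then show "eventually (\<lambda>z. a < fst z) FF"
    using ev_fst[OF ev_unit] by (auto elim: eventually_mono)
next
  fix a :: real assume a: "0 < a"
  have "eventually (\<lambda>x::real. x < a) (at_right 0)"
    using eventually_at_right_real[OF a] by (auto elim: eventually_mono)
  then show "eventually (\<lambda>z. fst z < a) FF" by (rule ev_fst)
qed

lemma snd0: "((\<lambda>z. snd z) \<longlongrightarrow> (0::real)) FF"
proof (rule order_tendstoI)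
  fix a :: real assume "a < 0"
  then show "eventually (\<lambda>z. a < snd z) FF"
    using ev_snd[OF ev_unit] by (auto elim: eventually_mono)
next
  fix a :: real assume a: "0 < a"
  have "eventually (\<lambda>x::real. x < a) (at_right 0)"
    using eventually_at_right_real[OF a] by (auto elim: eventually_mono)
  then show "eventually (\<lambda>z. snd z < a) FF" by (rule ev_snd)
qed

lemma enn2real_le_of_le:
  assumes "x \<le> ennreal r" "0 \<le> r"
  shows "enn2real x \<le> r"
  using enn2real_mono[OF assms(1)] assms(2) by simp

lemma le_enn2real_of_le:
  assumes "ennreal v \<le> x" "x < top"
  shows "v \<le> enn2real x"
proof (cases "v \<le> 0")
  case True then show ?thesis by (meson enn2real_nonneg order_trans)
next
  case False
  then have "enn2real (ennreal v) \<le> enn2real x" using enn2real_mono[OF assms] by simp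
  then show ?thesis using False by simp
qed

context full begin

lemma CC_nonneg: "\<delta> > 0 \<Longrightarrow> CC A \<delta> \<ge> 0"
  unfolding CC_def by (intro sum_nonneg suminf_nonneg Bset_summable) auto

lemma main_i:
  fixes a b c d :: "real \<Rightarrow> real \<Rightarrow> real"
  assumes thresholds: "\<forall>\<alpha> \<beta>. 0 < \<alpha> \<and> \<alpha> < 1 \<and> 0 < \<beta> \<and> \<beta> < 1 \<longrightarrow>
                 0 < a \<alpha> \<beta> \<and> 0 < b \<alpha> \<beta> \<and> 0 < c \<alpha> \<beta> \<and> 0 < d \<alpha> \<beta> \<and>
                 in_Delta K M P0 P1 \<alpha> \<beta> (Pi_lu K l u)
                   (hatT K l u llr (a \<alpha> \<beta>) (b \<alpha> \<beta>) (c \<alpha> \<beta>) (d \<alpha> \<beta>))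
                   (hatD K l u llr (a \<alpha> \<beta>) (b \<alpha> \<beta>) (c \<alpha> \<beta>) (d \<alpha> \<beta>))"
    and a_asymp: "(\<lambda>z. a (fst z) (snd z)) \<sim>[FF] (\<lambda>z. \<bar>ln (fst z)\<bar>)"
    and c_asymp: "(\<lambda>z. c (fst z) (snd z)) \<sim>[FF] (\<lambda>z. \<bar>ln (fst z)\<bar>)"
    and A: "A \<in> Pi_lu K l u" and i: "i \<in> A"
  shows "(\<forall>\<^sub>F z in FF.
            ExpT K P0 P1 A (hatT K l u llr (a (fst z) (snd z)) (b (fst z) (snd z)) (c (fst z) (snd z)) (d (fst z) (snd z)) i) \<noteq> \<infinity> \<and>
            Lopt K M P0 P1 (fst z) (snd z) (Pi_lu K l u) i A \<noteq> \<infinity>) \<and>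
        (\<lambda>z. enn2real (ExpT K P0 P1 A (hatT K l u llr (a (fst z) (snd z)) (b (fst z) (snd z)) (c (fst z) (snd z)) (d (fst z) (snd z)) i)))
          \<sim>[FF] (\<lambda>z. \<bar>ln (fst z)\<bar> / Ri A i) \<and>
        (\<lambda>z. enn2real (Lopt K M P0 P1 (fst z) (snd z) (Pi_lu K l u) i A))
          \<sim>[FF] (\<lambda>z. \<bar>ln (fst z)\<bar> / Ri A i)"
proof -
  define hT where "hT z = hatT K l u llr (a (fst z) (snd z)) (b (fst z) (snd z)) (c (fst z) (snd z)) (d (fst z) (snd z))" for z
  define hD where "hD z = hatD K l u llr (a (fst z) (snd z)) (b (fst z) (snd z)) (c (fst z) (snd z)) (d (fst z) (snd z))" for z
  define Ex where "Ex z = ExpT K P0 P1 A (hT z i)" for z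
  define Lo where "Lo z = Lopt K M P0 P1 (fst z) (snd z) (Pi_lu K l u) i A" for z
  define R where "R = Ri A i"
  define thr where "thr z = (if card A = l then c (fst z) (snd z) else a (fst z) (snd z))" for z
  note AP = Ai_props[OF A i]
  have R: "R > 0" using AP by (simp add: R_def)
  have AK: "A \<subseteq> {1..K}" "l \<le> card A" "card A \<le> u" using A by (auto simp: Pi_lu_def)
  have thr: "thr \<sim>[FF] (\<lambda>z. \<bar>ln (fst z)\<bar>)"
    using a_asymp c_asymp by (cases "card A = l") (simp_all add: thr_def[abs_def])
  have th: "0 < a (fst z) (snd z) \<and> 0 < b (fst z) (snd z) \<and> 0 < c (fst z) (snd z) \<and> 0 < d (fst z) (snd z) \<and>
      in_Delta K M P0 P1 (fst z) (snd z) (Pi_lu K l u) (hT z) (hD z)"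
    if "0 < fst z \<and> fst z < 1 \<and> 0 < snd z \<and> snd z < 1" for z
    using thresholds that unfolding hT_def hD_def by blast
  have ub: "Ex z \<le> ennreal (thr z / (R - \<epsilon>) + 2 + CC A (\<epsilon> / 2))"
    if z: "0 < fst z \<and> fst z < 1 \<and> 0 < snd z \<and> snd z < 1" and e: "0 < \<epsilon>" "\<epsilon> < R" for z \<epsilon>
  proof -
    note t = th[OF z]
    have "is_procedure K M P0 P1 (hT z) (hD z)" using t by (simp add: in_Delta_def)
    then show ?thesis unfolding Ex_def thr_def R_def hT_def
      by (intro upper_i[OF AK i]) (use e t in \<open>auto simp: R_def hT_def\<close>)
  qed
  have fin: "Ex z < \<infinity>" if z: "0 < fst z \<and> fst z < 1 \<and> 0 < snd z \<and> snd z < 1" for z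
    using ub[OF z, of "R/2"] R by (auto simp: top_unique intro: le_less_trans)
  have LoE: "Lo z \<le> Ex z" if z: "0 < fst z \<and> fst z < 1 \<and> 0 < snd z \<and> snd z < 1" for z
    unfolding Lo_def Lopt_def Ex_def using th[OF z]
    by (intro INF_lower2[of "(hT z, hD z)"]) auto
  have part1: "\<forall>\<^sub>F z in FF. Ex z \<noteq> \<infinity> \<and> Lo z \<noteq> \<infinity>"
    using evF
  proof (rule eventually_mono)
    fix z :: "real \<times> real" assume z: "0 < fst z \<and> fst z < 1 \<and> 0 < snd z \<and> snd z < 1"
    have 1: "Ex z < \<infinity>" by (rule fin[OF z])
    have 2: "Lo z < \<infinity>" using LoE[OF z] 1 by (rule le_less_trans)
    show "Ex z \<noteq> \<infinity> \<and> Lo z \<noteq> \<infinity>" using 1 2 by auto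
  qed
  have xpos: "eventually (\<lambda>z. 0 < fst z) FF" using evF by (auto elim: eventually_mono)
  have up: "\<exists>C. eventually (\<lambda>z. enn2real (Ex z) \<le> thr z / (R - \<epsilon>) + C) FF"
    if e: "0 < \<epsilon>" "\<epsilon> < R" for \<epsilon>
  proof -
    show "\<exists>C. eventually (\<lambda>z. enn2real (Ex z) \<le> thr z / (R - \<epsilon>) + C) FF"
    proof (intro exI[of _ "2 + CC A (\<epsilon> / 2)"])
      show "eventually (\<lambda>z. enn2real (Ex z) \<le> thr z / (R - \<epsilon>) + (2 + CC A (\<epsilon> / 2))) FF"
        using evF
      proof (rule eventually_mono)
        fix z :: "real \<times> real" assume z: "0 < fst z \<and> fst z < 1 \<and> 0 < snd z \<and> snd z < 1"
        have "thr z \<ge> 0" using th[OF z] by (simp add: thr_def less_imp_le)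
        then have "0 \<le> thr z / (R - \<epsilon>) + 2 + CC A (\<epsilon> / 2)" using CC_nonneg[of "\<epsilon>/2" A] e by simp
        then show "enn2real (Ex z) \<le> thr z / (R - \<epsilon>) + (2 + CC A (\<epsilon> / 2))"
          using enn2real_le_of_le[OF ub[OF z e]] by (simp add: add.assoc)
      qed
    qed
  qed
  have lo: "\<exists>p. p \<longlonglongrightarrow> 0 \<and> eventually (\<lambda>z.
        real (nat \<lfloor>(1 - \<epsilon>) / ((1 + \<epsilon>) * R) * \<bar>ln (fst z)\<bar>\<rfloor>) *
          (1 - snd z - fst z powr \<epsilon> - p (nat \<lfloor>(1 - \<epsilon>) / ((1 + \<epsilon>) * R) * \<bar>ln (fst z)\<bar>\<rfloor>)) \<le> enn2real (Lo z)) FF"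
    if e: "0 < \<epsilon>" "\<epsilon> < 1" for \<epsilon>
  proof -
    define p where "p N = measure (PA K P0 P1 A) {\<omega>\<in>space (joint_space K M).
        \<exists>n\<in>{1..N}. (1 + \<epsilon>) * Rt A (Ai A i) * real N \<le> Lam A (Ai A i) n \<omega>}" for N
    have pt: "p \<longlonglongrightarrow> 0" unfolding p_def by (rule p_tendsto) (use AP e in auto)
    show "\<exists>p. p \<longlonglongrightarrow> 0 \<and> eventually (\<lambda>z.
        real (nat \<lfloor>(1 - \<epsilon>) / ((1 + \<epsilon>) * R) * \<bar>ln (fst z)\<bar>\<rfloor>) *
          (1 - snd z - fst z powr \<epsilon> - p (nat \<lfloor>(1 - \<epsilon>) / ((1 + \<epsilon>) * R) * \<bar>ln (fst z)\<bar>\<rfloor>)) \<le> enn2real (Lo z)) FF"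
    proof (intro exI[of _ p] conjI pt)
      show "eventually (\<lambda>z.
        real (nat \<lfloor>(1 - \<epsilon>) / ((1 + \<epsilon>) * R) * \<bar>ln (fst z)\<bar>\<rfloor>) *
          (1 - snd z - fst z powr \<epsilon> - p (nat \<lfloor>(1 - \<epsilon>) / ((1 + \<epsilon>) * R) * \<bar>ln (fst z)\<bar>\<rfloor>)) \<le> enn2real (Lo z)) FF"
        using evF
      proof (rule eventually_mono)
        fix z :: "real \<times> real" assume z: "0 < fst z \<and> fst z < 1 \<and> 0 < snd z \<and> snd z < 1"
        let ?v = "real (nat \<lfloor>(1 - \<epsilon>) / ((1 + \<epsilon>) * R) * \<bar>ln (fst z)\<bar>\<rfloor>) *
          (1 - snd z - fst z powr \<epsilon> - p (nat \<lfloor>(1 - \<epsilon>) / ((1 + \<epsilon>) * R) * \<bar>ln (fst z)\<bar>\<rfloor>))"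
        have "ennreal ?v \<le> Lo z"
          unfolding Lo_def Lopt_def
        proof (rule INF_greatest)
          fix TD assume "TD \<in> {(T, D). in_Delta K M P0 P1 (fst z) (snd z) (Pi_lu K l u) T D}"
          then obtain T D where TD: "TD = (T, D)" "in_Delta K M P0 P1 (fst z) (snd z) (Pi_lu K l u) T D" by blast
          show "ennreal ?v \<le> ExpT K P0 P1 A (fst TD i)"
            using lower_i[OF A i TD(2) _ _ e] z unfolding TD(1) p_def R_def by simp
        qed
        moreover have "Lo z < top" using LoE[OF z] fin[OF z] by (simp add: le_less_trans)
        ultimately show "?v \<le> enn2real (Lo z)" by (rule le_enn2real_of_le)
      qed
    qed
  qed
  have le: "eventually (\<lambda>z. enn2real (Lo z) \<le> enn2real (Ex z)) FF"
    using evF by (rule eventually_mono) (use LoE fin in \<open>auto intro: enn2real_mono\<close>)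
  have asy: "(\<lambda>z. enn2real (Ex z)) \<sim>[FF] (\<lambda>z. \<bar>ln (fst z)\<bar> / R) \<and> (\<lambda>z. enn2real (Lo z)) \<sim>[FF] (\<lambda>z. \<bar>ln (fst z)\<bar> / R)"
    using asym_main[OF R fst0 xpos snd0 thr up lo le] by blast
  show ?thesis using part1 asy unfolding Ex_def Lo_def hT_def R_def by simp
qed


lemma main_j:
  fixes a b c d :: "real \<Rightarrow> real \<Rightarrow> real"
  assumes thresholds: "\<forall>\<alpha> \<beta>. 0 < \<alpha> \<and> \<alpha> < 1 \<and> 0 < \<beta> \<and> \<beta> < 1 \<longrightarrow>
                 0 < a \<alpha> \<beta> \<and> 0 < b \<alpha> \<beta> \<and> 0 < c \<alpha> \<beta> \<and> 0 < d \<alpha> \<beta> \<and>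
                 in_Delta K M P0 P1 \<alpha> \<beta> (Pi_lu K l u)
                   (hatT K l u llr (a \<alpha> \<beta>) (b \<alpha> \<beta>) (c \<alpha> \<beta>) (d \<alpha> \<beta>))
                   (hatD K l u llr (a \<alpha> \<beta>) (b \<alpha> \<beta>) (c \<alpha> \<beta>) (d \<alpha> \<beta>))"
    and b_asymp: "(\<lambda>z. b (fst z) (snd z)) \<sim>[FF] (\<lambda>z. \<bar>ln (snd z)\<bar>)"
    and d_asymp: "(\<lambda>z. d (fst z) (snd z)) \<sim>[FF] (\<lambda>z. \<bar>ln (snd z)\<bar>)"
    and A: "A \<in> Pi_lu K l u" and i: "i \<in> {1..K} - A"
  shows "(\<forall>\<^sub>F z in FF.
            ExpT K P0 P1 A (hatT K l u llr (a (fst z) (snd z)) (b (fst z) (snd z)) (c (fst z) (snd z)) (d (fst z) (snd z)) i) \<noteq> \<infinity> \<and>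
            Lopt K M P0 P1 (fst z) (snd z) (Pi_lu K l u) i A \<noteq> \<infinity>) \<and>
        (\<lambda>z. enn2real (ExpT K P0 P1 A (hatT K l u llr (a (fst z) (snd z)) (b (fst z) (snd z)) (c (fst z) (snd z)) (d (fst z) (snd z)) i)))
          \<sim>[FF] (\<lambda>z. \<bar>ln (snd z)\<bar> / Rj A i) \<and>
        (\<lambda>z. enn2real (Lopt K M P0 P1 (fst z) (snd z) (Pi_lu K l u) i A))
          \<sim>[FF] (\<lambda>z. \<bar>ln (snd z)\<bar> / Rj A i)"
proof -
  define hT where "hT z = hatT K l u llr (a (fst z) (snd z)) (b (fst z) (snd z)) (c (fst z) (snd z)) (d (fst z) (snd z))" for z
  define hD where "hD z = hatD K l u llr (a (fst z) (snd z)) (b (fst z) (snd z)) (c (fst z) (snd z)) (d (fst z) (snd z))" for z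
  define Ex where "Ex z = ExpT K P0 P1 A (hT z i)" for z
  define Lo where "Lo z = Lopt K M P0 P1 (fst z) (snd z) (Pi_lu K l u) i A" for z
  define R where "R = Rj A i"
  define thr where "thr z = (if card A = u then d (fst z) (snd z) else b (fst z) (snd z))" for z
  note AP = Aj_props[OF A i]
  have R: "R > 0" using AP by (simp add: R_def)
  have AK: "A \<subseteq> {1..K}" "l \<le> card A" "card A \<le> u" using A by (auto simp: Pi_lu_def)
  have thr: "thr \<sim>[FF] (\<lambda>z. \<bar>ln (snd z)\<bar>)"
    using b_asymp d_asymp by (cases "card A = u") (simp_all add: thr_def[abs_def])
  have th: "0 < a (fst z) (snd z) \<and> 0 < b (fst z) (snd z) \<and> 0 < c (fst z) (snd z) \<and> 0 < d (fst z) (snd z) \<and>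
      in_Delta K M P0 P1 (fst z) (snd z) (Pi_lu K l u) (hT z) (hD z)"
    if "0 < fst z \<and> fst z < 1 \<and> 0 < snd z \<and> snd z < 1" for z
    using thresholds that unfolding hT_def hD_def by blast
  have ub: "Ex z \<le> ennreal (thr z / (R - \<epsilon>) + 2 + CC A (\<epsilon> / 2))"
    if z: "0 < fst z \<and> fst z < 1 \<and> 0 < snd z \<and> snd z < 1" and e: "0 < \<epsilon>" "\<epsilon> < R" for z \<epsilon>
  proof -
    note t = th[OF z]
    have "is_procedure K M P0 P1 (hT z) (hD z)" using t by (simp add: in_Delta_def)
    then show ?thesis unfolding Ex_def thr_def R_def hT_def
      by (intro upper_j[OF AK i]) (use e t in \<open>auto simp: R_def hT_def\<close>)
  qed
  have fin: "Ex z < \<infinity>" if z: "0 < fst z \<and> fst z < 1 \<and> 0 < snd z \<and> snd z < 1" for z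
    using ub[OF z, of "R/2"] R by (auto simp: top_unique intro: le_less_trans)
  have LoE: "Lo z \<le> Ex z" if z: "0 < fst z \<and> fst z < 1 \<and> 0 < snd z \<and> snd z < 1" for z
    unfolding Lo_def Lopt_def Ex_def using th[OF z]
    by (intro INF_lower2[of "(hT z, hD z)"]) auto
  have part1: "\<forall>\<^sub>F z in FF. Ex z \<noteq> \<infinity> \<and> Lo z \<noteq> \<infinity>"
    using evF
  proof (rule eventually_mono)
    fix z :: "real \<times> real" assume z: "0 < fst z \<and> fst z < 1 \<and> 0 < snd z \<and> snd z < 1"
    have 1: "Ex z < \<infinity>" by (rule fin[OF z])
    have 2: "Lo z < \<infinity>" using LoE[OF z] 1 by (rule le_less_trans)
    show "Ex z \<noteq> \<infinity> \<and> Lo z \<noteq> \<infinity>" using 1 2 by auto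
  qed
  have xpos: "eventually (\<lambda>z. 0 < snd z) FF" using evF by (auto elim: eventually_mono)
  have up: "\<exists>C. eventually (\<lambda>z. enn2real (Ex z) \<le> thr z / (R - \<epsilon>) + C) FF"
    if e: "0 < \<epsilon>" "\<epsilon> < R" for \<epsilon>
  proof -
    show "\<exists>C. eventually (\<lambda>z. enn2real (Ex z) \<le> thr z / (R - \<epsilon>) + C) FF"
    proof (intro exI[of _ "2 + CC A (\<epsilon> / 2)"])
      show "eventually (\<lambda>z. enn2real (Ex z) \<le> thr z / (R - \<epsilon>) + (2 + CC A (\<epsilon> / 2))) FF"
        using evF
      proof (rule eventually_mono)
        fix z :: "real \<times> real" assume z: "0 < fst z \<and> fst z < 1 \<and> 0 < snd z \<and> snd z < 1"
        have "thr z \<ge> 0" using th[OF z] by (simp add: thr_def less_imp_le)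
        then have "0 \<le> thr z / (R - \<epsilon>) + 2 + CC A (\<epsilon> / 2)" using CC_nonneg[of "\<epsilon>/2" A] e by simp
        then show "enn2real (Ex z) \<le> thr z / (R - \<epsilon>) + (2 + CC A (\<epsilon> / 2))"
          using enn2real_le_of_le[OF ub[OF z e]] by (simp add: add.assoc)
      qed
    qed
  qed
  have lo: "\<exists>p. p \<longlonglongrightarrow> 0 \<and> eventually (\<lambda>z.
        real (nat \<lfloor>(1 - \<epsilon>) / ((1 + \<epsilon>) * R) * \<bar>ln (snd z)\<bar>\<rfloor>) *
          (1 - fst z - snd z powr \<epsilon> - p (nat \<lfloor>(1 - \<epsilon>) / ((1 + \<epsilon>) * R) * \<bar>ln (snd z)\<bar>\<rfloor>)) \<le> enn2real (Lo z)) FF"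
    if e: "0 < \<epsilon>" "\<epsilon> < 1" for \<epsilon>
  proof -
    define p where "p N = measure (PA K P0 P1 A) {\<omega>\<in>space (joint_space K M).
        \<exists>n\<in>{1..N}. (1 + \<epsilon>) * Rt A (Aj A i) * real N \<le> Lam A (Aj A i) n \<omega>}" for N
    have pt: "p \<longlonglongrightarrow> 0" unfolding p_def by (rule p_tendsto) (use AP e in auto)
    show "\<exists>p. p \<longlonglongrightarrow> 0 \<and> eventually (\<lambda>z.
        real (nat \<lfloor>(1 - \<epsilon>) / ((1 + \<epsilon>) * R) * \<bar>ln (snd z)\<bar>\<rfloor>) *
          (1 - fst z - snd z powr \<epsilon> - p (nat \<lfloor>(1 - \<epsilon>) / ((1 + \<epsilon>) * R) * \<bar>ln (snd z)\<bar>\<rfloor>)) \<le> enn2real (Lo z)) FF"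
    proof (intro exI[of _ p] conjI pt)
      show "eventually (\<lambda>z.
        real (nat \<lfloor>(1 - \<epsilon>) / ((1 + \<epsilon>) * R) * \<bar>ln (snd z)\<bar>\<rfloor>) *
          (1 - fst z - snd z powr \<epsilon> - p (nat \<lfloor>(1 - \<epsilon>) / ((1 + \<epsilon>) * R) * \<bar>ln (snd z)\<bar>\<rfloor>)) \<le> enn2real (Lo z)) FF"
        using evF
      proof (rule eventually_mono)
        fix z :: "real \<times> real" assume z: "0 < fst z \<and> fst z < 1 \<and> 0 < snd z \<and> snd z < 1"
        let ?v = "real (nat \<lfloor>(1 - \<epsilon>) / ((1 + \<epsilon>) * R) * \<bar>ln (snd z)\<bar>\<rfloor>) *
          (1 - fst z - snd z powr \<epsilon> - p (nat \<lfloor>(1 - \<epsilon>) / ((1 + \<epsilon>) * R) * \<bar>ln (snd z)\<bar>\<rfloor>))"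
        have "ennreal ?v \<le> Lo z"
          unfolding Lo_def Lopt_def
        proof (rule INF_greatest)
          fix TD assume "TD \<in> {(T, D). in_Delta K M P0 P1 (fst z) (snd z) (Pi_lu K l u) T D}"
          then obtain T D where TD: "TD = (T, D)" "in_Delta K M P0 P1 (fst z) (snd z) (Pi_lu K l u) T D" by blast
          show "ennreal ?v \<le> ExpT K P0 P1 A (fst TD i)"
            using lower_j[OF A i TD(2) _ _ e] z unfolding TD(1) p_def R_def by simp
        qed
        moreover have "Lo z < top" using LoE[OF z] fin[OF z] by (simp add: le_less_trans)
        ultimately show "?v \<le> enn2real (Lo z)" by (rule le_enn2real_of_le)
      qed
    qed
  qed
  have le: "eventually (\<lambda>z. enn2real (Lo z) \<le> enn2real (Ex z)) FF"
    using evF by (rule eventually_mono) (use LoE fin in \<open>auto intro: enn2real_mono\<close>)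
  have asy: "(\<lambda>z. enn2real (Ex z)) \<sim>[FF] (\<lambda>z. \<bar>ln (snd z)\<bar> / R) \<and> (\<lambda>z. enn2real (Lo z)) \<sim>[FF] (\<lambda>z. \<bar>ln (snd z)\<bar> / R)"
    using asym_main[OF R snd0 xpos fst0 thr up lo le] by blast
  show ?thesis using part1 asy unfolding Ex_def Lo_def hT_def R_def by simp
qed

end

theorem theorem5p2:
  fixes K l u :: nat
    and M :: "nat \<Rightarrow> 'x measure"
    and P0 P1 :: "nat \<Rightarrow> (nat \<Rightarrow> 'x) measure"
    and llr :: "nat \<Rightarrow> nat \<Rightarrow> (nat \<Rightarrow> 'x) \<Rightarrow> real"
    and I J :: "nat \<Rightarrow> real"
    and a b c d :: "real \<Rightarrow> real \<Rightarrow> real"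
  assumes lu: "l \<le> u" "u \<le> K" "0 < u" "l < K"
    and laws: "\<And>k. k \<in> {1..K} \<Longrightarrow> prob_space (P0 k) \<and> prob_space (P1 k) \<and>
                 sets (P0 k) = sets (strm_path_space M k) \<and> sets (P1 k) = sets (strm_path_space M k)"
    and llr: "\<And>k n. k \<in> {1..K} \<Longrightarrow> 1 \<le> n \<Longrightarrow>
                 llr k n \<in> borel_measurable (stream_filt M k n) \<and>
                 (\<forall>B\<in>sets (stream_filt M k n).
                    emeasure (P1 k) B = (\<integral>\<^sup>+ x\<in>B. ennreal (exp (llr k n x)) \<partial>P0 k))"
    and IJpos: "\<And>k. k \<in> {1..K} \<Longrightarrow> 0 < I k \<and> 0 < J k"
    and limsupI: "\<And>k. k \<in> {1..K} \<Longrightarrow>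
                 AE x in P1 k. limsup (\<lambda>n. ereal (llr k n x / real n)) \<le> ereal (I k)"
    and limsupJ: "\<And>k. k \<in> {1..K} \<Longrightarrow>
                 AE x in P0 k. limsup (\<lambda>n. ereal (- llr k n x / real n)) \<le> ereal (J k)"
    and compI: "\<And>k \<epsilon>. k \<in> {1..K} \<Longrightarrow> 0 < \<epsilon> \<Longrightarrow>
                 summable (\<lambda>n. measure (P1 k)
                   {x \<in> space (P1 k). llr k (Suc n) x / real (Suc n) \<le> I k - \<epsilon>})"
    and compJ: "\<And>k \<epsilon>. k \<in> {1..K} \<Longrightarrow> 0 < \<epsilon> \<Longrightarrow>
                 summable (\<lambda>n. measure (P0 k)
                   {x \<in> space (P0 k). - llr k (Suc n) x / real (Suc n) \<le> J k - \<epsilon>})"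
    and thresholds: "\<And>\<alpha> \<beta>. 0 < \<alpha> \<Longrightarrow> \<alpha> < 1 \<Longrightarrow> 0 < \<beta> \<Longrightarrow> \<beta> < 1 \<Longrightarrow>
                 0 < a \<alpha> \<beta> \<and> 0 < b \<alpha> \<beta> \<and> 0 < c \<alpha> \<beta> \<and> 0 < d \<alpha> \<beta> \<and>
                 in_Delta K M P0 P1 \<alpha> \<beta> (Pi_lu K l u)
                   (hatT K l u llr (a \<alpha> \<beta>) (b \<alpha> \<beta>) (c \<alpha> \<beta>) (d \<alpha> \<beta>))
                   (hatD K l u llr (a \<alpha> \<beta>) (b \<alpha> \<beta>) (c \<alpha> \<beta>) (d \<alpha> \<beta>))"
    and a_asymp: "(\<lambda>(\<alpha>, \<beta>). a \<alpha> \<beta>) \<sim>[at_right 0 \<times>\<^sub>F at_right 0] (\<lambda>(\<alpha>, \<beta>). \<bar>ln \<alpha>\<bar>)"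
    and c_asymp: "(\<lambda>(\<alpha>, \<beta>). c \<alpha> \<beta>) \<sim>[at_right 0 \<times>\<^sub>F at_right 0] (\<lambda>(\<alpha>, \<beta>). \<bar>ln \<alpha>\<bar>)"
    and b_asymp: "(\<lambda>(\<alpha>, \<beta>). b \<alpha> \<beta>) \<sim>[at_right 0 \<times>\<^sub>F at_right 0] (\<lambda>(\<alpha>, \<beta>). \<bar>ln \<beta>\<bar>)"
    and d_asymp: "(\<lambda>(\<alpha>, \<beta>). d \<alpha> \<beta>) \<sim>[at_right 0 \<times>\<^sub>F at_right 0] (\<lambda>(\<alpha>, \<beta>). \<bar>ln \<beta>\<bar>)"
  shows "\<forall>A \<in> Pi_lu K l u.
     (\<forall>i \<in> A.
        (\<forall>\<^sub>F (\<alpha>, \<beta>) in at_right 0 \<times>\<^sub>F at_right 0.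
            ExpT K P0 P1 A (hatT K l u llr (a \<alpha> \<beta>) (b \<alpha> \<beta>) (c \<alpha> \<beta>) (d \<alpha> \<beta>) i) \<noteq> \<infinity> \<and>
            Lopt K M P0 P1 \<alpha> \<beta> (Pi_lu K l u) i A \<noteq> \<infinity>) \<and>
        (\<lambda>(\<alpha>, \<beta>). enn2real (ExpT K P0 P1 A (hatT K l u llr (a \<alpha> \<beta>) (b \<alpha> \<beta>) (c \<alpha> \<beta>) (d \<alpha> \<beta>) i)))
          \<sim>[at_right 0 \<times>\<^sub>F at_right 0]
        (\<lambda>(\<alpha>, \<beta>). \<bar>ln \<alpha>\<bar> / (I i + (if card A = l then calJ K J A else 0))) \<and>
        (\<lambda>(\<alpha>, \<beta>). enn2real (Lopt K M P0 P1 \<alpha> \<beta> (Pi_lu K l u) i A))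
          \<sim>[at_right 0 \<times>\<^sub>F at_right 0]
        (\<lambda>(\<alpha>, \<beta>). \<bar>ln \<alpha>\<bar> / (I i + (if card A = l then calJ K J A else 0)))) \<and>
     (\<forall>j \<in> {1..K} - A.
        (\<forall>\<^sub>F (\<alpha>, \<beta>) in at_right 0 \<times>\<^sub>F at_right 0.
            ExpT K P0 P1 A (hatT K l u llr (a \<alpha> \<beta>) (b \<alpha> \<beta>) (c \<alpha> \<beta>) (d \<alpha> \<beta>) j) \<noteq> \<infinity> \<and>
            Lopt K M P0 P1 \<alpha> \<beta> (Pi_lu K l u) j A \<noteq> \<infinity>) \<and>
        (\<lambda>(\<alpha>, \<beta>). enn2real (ExpT K P0 P1 A (hatT K l u llr (a \<alpha> \<beta>) (b \<alpha> \<beta>) (c \<alpha> \<beta>) (d \<alpha> \<beta>) j)))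
          \<sim>[at_right 0 \<times>\<^sub>F at_right 0]
        (\<lambda>(\<alpha>, \<beta>). \<bar>ln \<beta>\<bar> / (J j + (if card A = u then calI I A else 0))) \<and>
        (\<lambda>(\<alpha>, \<beta>). enn2real (Lopt K M P0 P1 \<alpha> \<beta> (Pi_lu K l u) j A))
          \<sim>[at_right 0 \<times>\<^sub>F at_right 0]
        (\<lambda>(\<alpha>, \<beta>). \<bar>ln \<beta>\<bar> / (J j + (if card A = u then calI I A else 0))))"
  proof -
  interpret full K M P0 P1 llr I J l u
    by unfold_locales (use lu laws llr IJpos limsupI limsupJ compI compJ in auto)
  have a': "(\<lambda>z. a (fst z) (snd z)) \<sim>[FF] (\<lambda>z. \<bar>ln (fst z)\<bar>)" using a_asymp by (simp add: case_prod_unfold)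
  have b': "(\<lambda>z. b (fst z) (snd z)) \<sim>[FF] (\<lambda>z. \<bar>ln (snd z)\<bar>)" using b_asymp by (simp add: case_prod_unfold)
  have c': "(\<lambda>z. c (fst z) (snd z)) \<sim>[FF] (\<lambda>z. \<bar>ln (fst z)\<bar>)" using c_asymp by (simp add: case_prod_unfold)
  have d': "(\<lambda>z. d (fst z) (snd z)) \<sim>[FF] (\<lambda>z. \<bar>ln (snd z)\<bar>)" using d_asymp by (simp add: case_prod_unfold)
  have thr_obj: "\<forall>\<alpha> \<beta>. 0 < \<alpha> \<and> \<alpha> < 1 \<and> 0 < \<beta> \<and> \<beta> < 1 \<longrightarrow>
                 0 < a \<alpha> \<beta> \<and> 0 < b \<alpha> \<beta> \<and> 0 < c \<alpha> \<beta> \<and> 0 < d \<alpha> \<beta> \<and>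
                 in_Delta K M P0 P1 \<alpha> \<beta> (Pi_lu K l u)
                   (hatT K l u llr (a \<alpha> \<beta>) (b \<alpha> \<beta>) (c \<alpha> \<beta>) (d \<alpha> \<beta>))
                   (hatD K l u llr (a \<alpha> \<beta>) (b \<alpha> \<beta>) (c \<alpha> \<beta>) (d \<alpha> \<beta>))"
    using thresholds by blast
  note mi = main_i[OF thr_obj a' c']
  note mj = main_j[OF thr_obj b' d']
  show ?thesis unfolding case_prod_unfold
    using mi[unfolded Ri_def] mj[unfolded Rj_def] by blast
qed

end
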